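(* Let $X$ be a compact Hausdorff space, $\varphi:X\to X$ a homeomorphism, and $y\in X$ periodic. Then for every $F\in C(X)\rtimes_\varphi\mathbb{Z}^+$, $$\|\pi_y(F)\|\ \ge\ \sup_{\lambda\in\mathbb{T}}\|\Pi_{y,\lambda}(F)\|.$$
   Context: Semicrossed product: let $\mathcal{A}_0$ be the algebra generated by $C(X)$ and a symbol $U$ subject to $fU=U(f\circ\varphi)$, with elements $\sum_{n=0}^NU^nf_n$, $f_n\in C(X)$; $C(X)\rtimes_\varphi\mathbb{Z}^+$ is its completion in the norm $\sup_\pi\|\pi(F)\|$ over homomorphisms $\pi$ into $\mathcal{B}(\mathcal{H})$ that are $*$-representations on $C(X)$ with $\pi(U)$ an isometry (these extend to the completion). For $x\in X$ set $x_n=\varphi^{n-1}(x)$ and define $\pi_x$ on $\ell^2(\mathbb{N})$ by $\pi_x(f)(z_1,z_2,\dots)=(f(x_1)z_1,f(x_2)z_2,\dots)$, $\pi_x(U)(z_1,z_2,\dots)=(0,z_1,z_2,\dots)$. For $y$ periodic of period $p$ and $\lambda\in\mathbb{T}$, $\Pi_{y,\lambda}$ is the representation on $\mathbb{C}^p$ with $\Pi_{y,\lambda}(f)(z_1,\dots,z_p)=(f(y_1)z_1,\dots,f(y_p)z_p)$, $y_j=\varphi^{j-1}(y)$, and $\Pi_{y,\lambda}(U)(z_1,\dots,z_p)=\lambda(z_p,z_1,\dots,z_{p-1})$. *)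

theory Defs
  imports "HOL-Analysis.Analysis"
begin

definition l2 :: "('h \<Rightarrow> complex) \<Rightarrow> bool" where
  "l2 z \<longleftrightarrow> (\<lambda>i. (cmod (z i))^2) summable_on UNIV"

definition l2norm :: "('h \<Rightarrow> complex) \<Rightarrow> real" where
  "l2norm z = sqrt (\<Sum>\<^sub>\<infinity>i. (cmod (z i))^2)"

definition l2inner :: "('h \<Rightarrow> complex) \<Rightarrow> ('h \<Rightarrow> complex) \<Rightarrow> complex" where
  "l2inner z w = (\<Sum>\<^sub>\<infinity>i. z i * cnj (w i))"

definition bounded_op :: "(('h \<Rightarrow> complex) \<Rightarrow> ('h \<Rightarrow> complex)) \<Rightarrow> bool" where
  "bounded_op T \<longleftrightarrow>
     (\<forall>z. l2 z \<longrightarrow> l2 (T z)) \<and>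
     (\<forall>z w. l2 z \<longrightarrow> l2 w \<longrightarrow> T (\<lambda>i. z i + w i) = (\<lambda>i. T z i + T w i)) \<and>
     (\<forall>c z. l2 z \<longrightarrow> T (\<lambda>i. c * z i) = (\<lambda>i. c * T z i)) \<and>
     (\<exists>C. \<forall>z. l2 z \<longrightarrow> l2norm (T z) \<le> C * l2norm z)"

definition opnorm :: "(('h \<Rightarrow> complex) \<Rightarrow> ('h \<Rightarrow> complex)) \<Rightarrow> real" where
  "opnorm T = Sup {l2norm (T z) | z. l2 z \<and> l2norm z \<le> 1}"

text \<open>An element sum_n U^n f_n is given by its coefficient sequence (finitely supported).\<close>
definition is_poly :: "(nat \<Rightarrow> 'x::topological_space \<Rightarrow> complex) \<Rightarrow> bool" where
  "is_poly fs \<longleftrightarrow> (\<forall>n. continuous_on UNIV (fs n)) \<and> finite {n. fs n \<noteq> (\<lambda>x. 0)}"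

text \<open>Image of sum_n U^n f_n under the homomorphism determined by rho on C(X) and V = image of U.\<close>
definition rep_poly ::
  "(('x \<Rightarrow> complex) \<Rightarrow> ('h \<Rightarrow> complex) \<Rightarrow> ('h \<Rightarrow> complex)) \<Rightarrow>
   (('h \<Rightarrow> complex) \<Rightarrow> ('h \<Rightarrow> complex)) \<Rightarrow> (nat \<Rightarrow> 'x \<Rightarrow> complex) \<Rightarrow>
   ('h \<Rightarrow> complex) \<Rightarrow> ('h \<Rightarrow> complex)" where
  "rep_poly \<rho> V fs z = (\<lambda>i. \<Sum>n\<in>{n. fs n \<noteq> (\<lambda>x. 0)}. (V ^^ n) (\<rho> (fs n) z) i)"

text \<open>Admissible representations on l2('h): *-representation rho of C(X) (not required unital),
  V an isometry, covariance  rho(f) V = V rho(f o phi)  (from fU = U(f o phi)).\<close>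
definition is_rep :: "('x::topological_space \<Rightarrow> 'x) \<Rightarrow>
   (('x \<Rightarrow> complex) \<Rightarrow> ('h \<Rightarrow> complex) \<Rightarrow> ('h \<Rightarrow> complex)) \<Rightarrow>
   (('h \<Rightarrow> complex) \<Rightarrow> ('h \<Rightarrow> complex)) \<Rightarrow> bool" where
  "is_rep \<phi> \<rho> V \<longleftrightarrow>
    (\<forall>f. continuous_on UNIV f \<longrightarrow> bounded_op (\<rho> f)) \<and>
    (\<forall>f g z. continuous_on UNIV f \<longrightarrow> continuous_on UNIV g \<longrightarrow> l2 z \<longrightarrow>
        \<rho> (\<lambda>x. f x + g x) z = (\<lambda>i. \<rho> f z i + \<rho> g z i)) \<and>
    (\<forall>c f z. continuous_on UNIV f \<longrightarrow> l2 z \<longrightarrow> \<rho> (\<lambda>x. c * f x) z = (\<lambda>i. c * \<rho> f z i)) \<and>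
    (\<forall>f g z. continuous_on UNIV f \<longrightarrow> continuous_on UNIV g \<longrightarrow> l2 z \<longrightarrow>
        \<rho> (\<lambda>x. f x * g x) z = \<rho> f (\<rho> g z)) \<and>
    (\<forall>f z w. continuous_on UNIV f \<longrightarrow> l2 z \<longrightarrow> l2 w \<longrightarrow>
        l2inner (\<rho> f z) w = l2inner z (\<rho> (\<lambda>x. cnj (f x)) w)) \<and>
    bounded_op V \<and> (\<forall>z. l2 z \<longrightarrow> l2norm (V z) = l2norm z) \<and>
    (\<forall>f z. continuous_on UNIV f \<longrightarrow> l2 z \<longrightarrow> \<rho> f (V z) = V (\<rho> (\<lambda>x. f (\<phi> x)) z))"

definition univ_norm :: "'h itself \<Rightarrow> ('x::topological_space \<Rightarrow> 'x) \<Rightarrow> (nat \<Rightarrow> 'x \<Rightarrow> complex) \<Rightarrow> real" where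
  "univ_norm _ \<phi> fs =
     Sup {opnorm (rep_poly \<rho> V fs) | (\<rho> :: ('x \<Rightarrow> complex) \<Rightarrow> ('h \<Rightarrow> complex) \<Rightarrow> ('h \<Rightarrow> complex)) V.
            is_rep \<phi> \<rho> V}"

text \<open>Elements of the completion C(X) x_phi Z^+: Cauchy sequences of polynomials for the universal norm.\<close>
definition in_completion :: "'h itself \<Rightarrow> ('x::topological_space \<Rightarrow> 'x) \<Rightarrow> (nat \<Rightarrow> nat \<Rightarrow> 'x \<Rightarrow> complex) \<Rightarrow> bool" where
  "in_completion H \<phi> P \<longleftrightarrow> (\<forall>k. is_poly (P k)) \<and>
     (\<forall>\<epsilon>>0. \<exists>N. \<forall>k\<ge>N. \<forall>m\<ge>N. univ_norm H \<phi> (\<lambda>n x. P k n x - P m n x) < \<epsilon>)"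

text \<open>Coordinates indexed from 0: coordinate i corresponds to x_{i+1} = phi^i(x).\<close>
definition orbit_mult :: "('x \<Rightarrow> 'x) \<Rightarrow> 'x \<Rightarrow> ('x \<Rightarrow> complex) \<Rightarrow> (nat \<Rightarrow> complex) \<Rightarrow> (nat \<Rightarrow> complex)" where
  "orbit_mult \<phi> x f z = (\<lambda>i. f ((\<phi> ^^ i) x) * z i)"

definition shift :: "(nat \<Rightarrow> complex) \<Rightarrow> (nat \<Rightarrow> complex)" where
  "shift z = (\<lambda>i. if i = 0 then 0 else z (i - 1))"

definition pi_x :: "('x \<Rightarrow> 'x) \<Rightarrow> 'x \<Rightarrow> (nat \<Rightarrow> 'x \<Rightarrow> complex) \<Rightarrow> (nat \<Rightarrow> complex) \<Rightarrow> (nat \<Rightarrow> complex)" where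
  "pi_x \<phi> x fs = rep_poly (orbit_mult \<phi> x) shift fs"

definition periodic_pt :: "('x \<Rightarrow> 'x) \<Rightarrow> 'x \<Rightarrow> bool" where
  "periodic_pt \<phi> y \<longleftrightarrow> (\<exists>p>0. (\<phi> ^^ p) y = y)"

definition period :: "('x \<Rightarrow> 'x) \<Rightarrow> 'x \<Rightarrow> nat" where
  "period \<phi> y = (LEAST p. p > 0 \<and> (\<phi> ^^ p) y = y)"

text \<open>Vectors of C^p are represented by functions nat => complex, only coordinates < p matter.\<close>
definition cyc :: "nat \<Rightarrow> complex \<Rightarrow> (nat \<Rightarrow> complex) \<Rightarrow> (nat \<Rightarrow> complex)" where
  "cyc p l z = (\<lambda>i. l * z ((i + p - 1) mod p))"

definition Pi_yl :: "('x \<Rightarrow> 'x) \<Rightarrow> 'x \<Rightarrow> complex \<Rightarrow> (nat \<Rightarrow> 'x \<Rightarrow> complex) \<Rightarrow> (nat \<Rightarrow> complex) \<Rightarrow> (nat \<Rightarrow> complex)" where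
  "Pi_yl \<phi> y l fs = rep_poly (orbit_mult \<phi> y) (cyc (period \<phi> y) l) fs"

definition vnorm :: "nat \<Rightarrow> (nat \<Rightarrow> complex) \<Rightarrow> real" where
  "vnorm p z = sqrt (\<Sum>i<p. (cmod (z i))^2)"

definition matnorm :: "nat \<Rightarrow> ((nat \<Rightarrow> complex) \<Rightarrow> (nat \<Rightarrow> complex)) \<Rightarrow> real" where
  "matnorm p T = Sup {vnorm p (T z) | z. vnorm p z \<le> 1}"

text \<open>Norm of the (continuous) extension to the completion of a norm-type functional N.\<close>
definition ext_norm :: "((nat \<Rightarrow> 'x \<Rightarrow> complex) \<Rightarrow> real) \<Rightarrow> (nat \<Rightarrow> nat \<Rightarrow> 'x \<Rightarrow> complex) \<Rightarrow> real" where
  "ext_norm N P = lim (\<lambda>k. N (P k))"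

end

theory Submission
  imports Defs
begin

lemma l2_zero[simp]: "l2 (\<lambda>i. 0)"
  by (simp add: l2_def)

lemma l2_add:
  assumes "l2 z" "l2 w" shows "l2 (\<lambda>i. z i + w i)"
proof -
  have s: "(\<lambda>i. 2 * (cmod (z i))^2 + 2 * (cmod (w i))^2) summable_on UNIV"
    using assms unfolding l2_def
    by (intro summable_on_add summable_on_cmult_right) auto
  have "(cmod (z i + w i))^2 \<le> 2 * (cmod (z i))^2 + 2 * (cmod (w i))^2" for i
  proof -
    have "cmod (z i + w i) \<le> cmod (z i) + cmod (w i)" by (rule norm_triangle_ineq)
    hence "(cmod (z i + w i))^2 \<le> (cmod (z i) + cmod (w i))^2"
      by (intro power_mono) auto
    also have "\<dots> \<le> 2 * (cmod (z i))^2 + 2 * (cmod (w i))^2"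
      by (smt (verit) sum_squares_bound zero_le_power2 power2_sum)
    finally show ?thesis .
  qed
  then show ?thesis unfolding l2_def
    by (intro summable_on_comparison_test[OF s]) auto
qed

lemma l2_scale:
  assumes "l2 z" shows "l2 (\<lambda>i. c * z i)"
  using assms unfolding l2_def
  by (simp add: norm_mult power_mult_distrib summable_on_cmult_right)

lemma l2sum_nonneg: "(\<Sum>\<^sub>\<infinity>i. (cmod (z i))^2) \<ge> 0"
  by (rule infsum_nonneg) auto

lemma l2norm_nonneg[simp]: "l2norm z \<ge> 0"
  by (simp add: l2norm_def l2sum_nonneg)

lemma l2norm_sq: "(l2norm z)^2 = (\<Sum>\<^sub>\<infinity>i. (cmod (z i))^2)"
  unfolding l2norm_def using l2sum_nonneg by simp

lemma l2_finite_le: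
  assumes "l2 z" "finite F"
  shows "(\<Sum>i\<in>F. (cmod (z i))^2) \<le> (l2norm z)^2"
  unfolding l2norm_sq using assms unfolding l2_def
  by (intro finite_sum_le_infsum) auto

lemma l2norm_le_finite:
  assumes "l2 z" "0 \<le> B" "\<And>F. finite F \<Longrightarrow> (\<Sum>i\<in>F. (cmod (z i))^2) \<le> B^2"
  shows "l2norm z \<le> B"
proof -
  have "(\<Sum>\<^sub>\<infinity>i. (cmod (z i))^2) \<le> B^2"
    using assms unfolding l2_def by (intro infsum_le_finite_sums) auto
  then have "sqrt (\<Sum>\<^sub>\<infinity>i. (cmod (z i))^2) \<le> sqrt (B^2)"
    by (rule real_sqrt_le_mono)
  then show ?thesis unfolding l2norm_def using assms(2) by simp
qed

lemma l2norm_triangle: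
  assumes "l2 z" "l2 w"
  shows "l2norm (\<lambda>i. z i + w i) \<le> l2norm z + l2norm w"
proof (rule l2norm_le_finite[OF l2_add[OF assms]])
  fix F :: "'a set" assume F: "finite F"
  have "L2_set (\<lambda>i. cmod (z i + w i)) F \<le> L2_set (\<lambda>i. cmod (z i) + cmod (w i)) F"
    by (intro L2_set_mono norm_triangle_ineq) auto
  also have "\<dots> \<le> L2_set (\<lambda>i. cmod (z i)) F + L2_set (\<lambda>i. cmod (w i)) F"
    by (rule L2_set_triangle_ineq)
  also have "L2_set (\<lambda>i. cmod (z i)) F \<le> l2norm z"
    unfolding L2_set_def using l2_finite_le[OF assms(1) F]
    by (metis l2norm_nonneg real_le_lsqrt sum_nonneg zero_le_power2)
  also have "L2_set (\<lambda>i. cmod (w i)) F \<le> l2norm w"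
    unfolding L2_set_def using l2_finite_le[OF assms(2) F]
    by (metis l2norm_nonneg real_le_lsqrt sum_nonneg zero_le_power2)
  finally have "sqrt (\<Sum>i\<in>F. (cmod (z i + w i))^2) \<le> l2norm z + l2norm w"
    unfolding L2_set_def by simp
  then show "(\<Sum>i\<in>F. (cmod (z i + w i))^2) \<le> (l2norm z + l2norm w)^2"
  proof -
    have h0: "(\<Sum>i\<in>F. (cmod (z i + w i))^2) \<ge> 0" by (simp add: sum_nonneg)
    have "(\<Sum>i\<in>F. (cmod (z i + w i))^2) = (sqrt (\<Sum>i\<in>F. (cmod (z i + w i))^2))^2"
      using h0 by simp
    also have "\<dots> \<le> (l2norm z + l2norm w)^2"
      by (rule power_mono[OF \<open>sqrt _ \<le> _\<close>]) (simp add: h0)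
    finally show ?thesis .
  qed
qed (intro add_nonneg_nonneg l2norm_nonneg)

lemma l2norm_scale:
  "l2norm (\<lambda>i. c * z i) = cmod c * l2norm z"
proof -
  have "(\<Sum>\<^sub>\<infinity>i. (cmod (c * z i))^2) = (cmod c)^2 * (\<Sum>\<^sub>\<infinity>i. (cmod (z i))^2)"
    by (simp add: norm_mult power_mult_distrib infsum_cmult_right')
  then show ?thesis unfolding l2norm_def by (simp add: real_sqrt_mult)
qed

lemma l2_finite_support:
  assumes "finite S" "\<And>i. i \<notin> S \<Longrightarrow> z i = 0"
  shows "l2 z" and "l2norm z = sqrt (\<Sum>i\<in>S. (cmod (z i))^2)"
proof -
  have "(\<lambda>i. (cmod (z i))^2) summable_on S" using assms by simp
  then show "l2 z" unfolding l2_def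
    by (subst summable_on_cong_neutral[of S UNIV]) (use assms in auto)
  have "(\<Sum>\<^sub>\<infinity>i. (cmod (z i))^2) = (\<Sum>\<^sub>\<infinity>i\<in>S. (cmod (z i))^2)"
    by (rule infsum_cong_neutral) (use assms in auto)
  then show "l2norm z = sqrt (\<Sum>i\<in>S. (cmod (z i))^2)"
    unfolding l2norm_def using assms by simp
qed

lemma l2inner_summable:
  assumes "l2 z" "l2 w"
  shows "(\<lambda>i. z i * cnj (w i)) summable_on UNIV"
proof -
  have s: "(\<lambda>i. (cmod (z i))^2 + (cmod (w i))^2) summable_on UNIV"
    using assms unfolding l2_def by (intro summable_on_add) auto
  have "norm (z i * cnj (w i)) \<le> (cmod (z i))^2 + (cmod (w i))^2" for i
  proof -
    have "norm (z i * cnj (w i)) = cmod (z i) * cmod (w i)" by (simp add: norm_mult)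
    also have "\<dots> \<le> (cmod (z i))^2 + (cmod (w i))^2"
      using sum_squares_bound[of "cmod (z i)" "cmod (w i)"]
        mult_nonneg_nonneg[OF norm_ge_zero norm_ge_zero, of "z i" "w i"] by linarith
    finally show ?thesis .
  qed
  then have "(\<lambda>i. norm (z i * cnj (w i))) summable_on UNIV"
    by (intro summable_on_comparison_test[OF s]) auto
  then show ?thesis
    using summable_on_iff_abs_summable_on_complex by blast
qed

lemma l2inner_self:
  assumes "l2 z"
  shows "l2inner z z = complex_of_real ((l2norm z)^2)"
proof -
  have "((\<lambda>i. (cmod (z i))^2) has_sum (\<Sum>\<^sub>\<infinity>i. (cmod (z i))^2)) UNIV"
    using assms unfolding l2_def by simp
  then have "((\<lambda>i. complex_of_real ((cmod (z i))^2)) has_sum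
      complex_of_real (\<Sum>\<^sub>\<infinity>i. (cmod (z i))^2)) UNIV"
    by (rule has_sum_of_real)
  then have "((\<lambda>i. z i * cnj (z i)) has_sum complex_of_real ((l2norm z)^2)) UNIV"
    unfolding l2norm_sq complex_norm_square .
  then show ?thesis unfolding l2inner_def by (rule infsumI)
qed

lemma l2inner_add_left:
  assumes "l2 a" "l2 b" "l2 w"
  shows "l2inner (\<lambda>i. a i + b i) w = l2inner a w + l2inner b w"
  unfolding l2inner_def
  using infsum_add[OF l2inner_summable[OF assms(1,3)] l2inner_summable[OF assms(2,3)]]
  by (simp add: distrib_right)

lemma l2inner_scale_left:
  "l2inner (\<lambda>i. c * a i) w = c * l2inner a w"
  unfolding l2inner_def
  by (simp add: mult.assoc infsum_cmult_right')

lemma l2inner_cnj: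
  "l2inner w z = cnj (l2inner z w)"
  unfolding l2inner_def infsum_cnj[symmetric]
  by (simp add: mult.commute)

lemma l2inner_add_right:
  assumes "l2 a" "l2 b" "l2 w"
  shows "l2inner w (\<lambda>i. a i + b i) = l2inner w a + l2inner w b"
  by (metis l2inner_cnj l2inner_add_left[OF assms] complex_cnj_add)

lemma l2inner_scale_right:
  "l2inner w (\<lambda>i. c * a i) = cnj c * l2inner w a"
  by (metis l2inner_cnj l2inner_scale_left complex_cnj_mult)

locale rep =
  fixes \<phi> :: "'x::topological_space \<Rightarrow> 'x" and \<rho> :: "('x \<Rightarrow> complex) \<Rightarrow> ('h \<Rightarrow> complex) \<Rightarrow> ('h \<Rightarrow> complex)"
    and V :: "('h \<Rightarrow> complex) \<Rightarrow> ('h \<Rightarrow> complex)"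
  assumes isrep: "is_rep \<phi> \<rho> V"
begin

lemma bop: "continuous_on UNIV f \<Longrightarrow> bounded_op (\<rho> f)"
  using isrep unfolding is_rep_def by blast

lemma l2_rho: "continuous_on UNIV f \<Longrightarrow> l2 z \<Longrightarrow> l2 (\<rho> f z)"
  using bop unfolding bounded_op_def by blast

lemma rho_add: "continuous_on UNIV f \<Longrightarrow> continuous_on UNIV g \<Longrightarrow> l2 z \<Longrightarrow>
        \<rho> (\<lambda>x. f x + g x) z = (\<lambda>i. \<rho> f z i + \<rho> g z i)"
  using isrep unfolding is_rep_def by blast

lemma rho_scale: "continuous_on UNIV f \<Longrightarrow> l2 z \<Longrightarrow> \<rho> (\<lambda>x. c * f x) z = (\<lambda>i. c * \<rho> f z i)"
  using isrep unfolding is_rep_def by blast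

lemma rho_mult: "continuous_on UNIV f \<Longrightarrow> continuous_on UNIV g \<Longrightarrow> l2 z \<Longrightarrow>
        \<rho> (\<lambda>x. f x * g x) z = \<rho> f (\<rho> g z)"
  using isrep unfolding is_rep_def by blast

lemma rho_adj: "continuous_on UNIV f \<Longrightarrow> l2 z \<Longrightarrow> l2 w \<Longrightarrow>
        l2inner (\<rho> f z) w = l2inner z (\<rho> (\<lambda>x. cnj (f x)) w)"
  using isrep unfolding is_rep_def by blast

lemma V_bop: "bounded_op V"
  using isrep unfolding is_rep_def by blast

lemma l2_V: "l2 z \<Longrightarrow> l2 (V z)"
  using V_bop unfolding bounded_op_def by blast

lemma V_iso: "l2 z \<Longrightarrow> l2norm (V z) = l2norm z"
  using isrep unfolding is_rep_def by blast

lemma V_add: "l2 z \<Longrightarrow> l2 w \<Longrightarrow> V (\<lambda>i. z i + w i) = (\<lambda>i. V z i + V w i)"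
  using V_bop unfolding bounded_op_def by blast

lemma V_scale: "l2 z \<Longrightarrow> V (\<lambda>i. c * z i) = (\<lambda>i. c * V z i)"
  using V_bop unfolding bounded_op_def by blast

lemma rho_one_contr:
  assumes z: "l2 z"
  shows "l2norm (\<rho> (\<lambda>x. 1) z) \<le> l2norm z"
proof -
  have c1: "continuous_on UNIV (\<lambda>x::'x. 1::complex)" by simp
  define a where "a = \<rho> (\<lambda>x. 1) z"
  have la: "l2 a" unfolding a_def by (rule l2_rho[OF c1 z])
  have idem: "\<rho> (\<lambda>x. 1) a = a"
    using rho_mult[OF c1 c1 z] unfolding a_def by simp
  have aa: "l2inner a a = l2inner z a"
    using rho_adj[OF c1 z la] idem unfolding a_def by simp
  define b where "b = (\<lambda>i. z i + (-1) * a i)"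
  have lb: "l2 b" unfolding b_def by (intro l2_add l2_scale z la)
  have zab: "z = (\<lambda>i. a i + b i)" unfolding b_def by auto
  have za: "l2inner z a = complex_of_real ((l2norm a)^2)"
    using aa l2inner_self[OF la] by metis
  have az: "l2inner a z = l2inner z a"
    using l2inner_cnj[of a z] za by (metis complex_cnj_complex_of_real)
  have ab: "l2inner a b = 0"
    unfolding b_def using l2inner_add_right[OF z l2_scale[OF la, of "-1"] la]
      l2inner_scale_right[where w=a and c="-1" and a=a] az aa by simp
  have ba: "l2inner b a = 0" using l2inner_cnj[of b a] ab by simp
  have "l2inner z z = l2inner a a + l2inner a b + (l2inner b a + l2inner b b)"
    apply (subst (1 2) zab)
    using l2inner_add_left[OF la lb l2_add[OF la lb]] l2inner_add_right[OF la lb la]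
      l2inner_add_right[OF la lb lb] by simp
  then have "complex_of_real ((l2norm z)^2) = complex_of_real ((l2norm a)^2 + (l2norm b)^2)"
    using ab ba l2inner_self[OF z] l2inner_self[OF la] l2inner_self[OF lb] by simp
  then have "(l2norm z)^2 = (l2norm a)^2 + (l2norm b)^2" using of_real_eq_iff by blast
  then have "(l2norm a)^2 \<le> (l2norm z)^2" by simp
  then show ?thesis unfolding a_def using power2_le_imp_le l2norm_nonneg by blast
qed

lemma rho_bound:
  assumes f: "continuous_on UNIV f" and K: "\<And>x. cmod (f x) \<le> K" and z: "l2 z"
  shows "l2norm (\<rho> f z) \<le> K * l2norm z"
proof -
  have K0: "0 \<le> K" using K[of undefined] norm_ge_zero order_trans by blast
  have c1: "continuous_on UNIV (\<lambda>x::'x. 1::complex)" by simp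
  define h where "h = (\<lambda>x. complex_of_real (sqrt (K^2 - (cmod (f x))^2)))"
  have ch: "continuous_on UNIV h" unfolding h_def
    by (intro continuous_intros f)
  have cf': "continuous_on UNIV (\<lambda>x. cnj (f x))" by (intro continuous_intros f)
  define g where "g = (\<lambda>x. cnj (f x) * f x)"
  have cg: "continuous_on UNIV g" unfolding g_def by (intro continuous_intros f)
  define c where "c = complex_of_real (K^2)"
  have cc1: "continuous_on UNIV (\<lambda>x::'x. c * 1)" by simp
  have cmg: "continuous_on UNIV (\<lambda>x. (-1) * g x)" by (intro continuous_intros cg)
  have hh: "(\<lambda>x. h x * h x) = (\<lambda>x. c * 1 + (-1) * g x)"
  proof
    fix x
    have "(cmod (f x))^2 \<le> K^2" using K[of x] by (simp add: power_mono)
    then have "h x * h x = complex_of_real (K^2 - (cmod (f x))^2)"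
    proof -
      assume a: "(cmod (f x))^2 \<le> K^2"
      have "h x * h x = complex_of_real (sqrt (K^2 - (cmod (f x))^2) * sqrt (K^2 - (cmod (f x))^2))"
        unfolding h_def by (simp only: of_real_mult)
      also have "sqrt (K^2 - (cmod (f x))^2) * sqrt (K^2 - (cmod (f x))^2) = K^2 - (cmod (f x))^2"
        using a by (simp only: real_sqrt_mult_self)
      finally show ?thesis .
    qed
    also have "\<dots> = c * 1 + (-1) * g x"
    proof -
      have "g x = complex_of_real ((cmod (f x))^2)"
        unfolding g_def by (metis complex_norm_square mult.commute)
      then show ?thesis unfolding c_def by (simp only: of_real_diff) simp
    qed
    finally show "h x * h x = c * 1 + (-1) * g x" .
  qed
  have l1: "l2 (\<rho> (\<lambda>x. 1) z)" by (rule l2_rho[OF c1 z])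
  have lh: "l2 (\<rho> h z)" by (rule l2_rho[OF ch z])
  have lf: "l2 (\<rho> f z)" by (rule l2_rho[OF f z])
  have lhh: "l2 (\<rho> h (\<rho> h z))" by (rule l2_rho[OF ch lh])
  have "\<rho> h (\<rho> h z) = \<rho> (\<lambda>x. c * 1 + (-1) * g x) z"
    using rho_mult[OF ch ch z] hh by simp
  also have "\<dots> = (\<lambda>i. c * \<rho> (\<lambda>x. 1) z i + (-1) * \<rho> g z i)"
    using rho_add[OF cc1 cmg z] rho_scale[OF c1 z, of c] rho_scale[OF cg z, of "-1"] by simp
  finally have eq0: "\<rho> h (\<rho> h z) = (\<lambda>i. c * \<rho> (\<lambda>x. 1) z i + (-1) * \<rho> g z i)" .
  have eq1: "\<rho> g z = (\<lambda>i. c * \<rho> (\<lambda>x. 1) z i + (-1) * \<rho> h (\<rho> h z) i)"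
  proof
    fix i
    have eqi: "\<rho> h (\<rho> h z) i = c * \<rho> (\<lambda>x. 1) z i + (-1) * \<rho> g z i"
      using fun_cong[OF eq0, of i] by simp
    show "\<rho> g z i = c * \<rho> (\<lambda>x. 1) z i + (-1) * \<rho> h (\<rho> h z) i"
      unfolding eqi by (simp add: algebra_simps)
  qed
  have eq2: "l2inner (\<rho> f z) (\<rho> f z) = l2inner z (\<rho> g z)"
    using rho_adj[OF f z lf] rho_mult[OF cf' f z] unfolding g_def by simp
  have idem: "\<rho> (\<lambda>x. 1) (\<rho> (\<lambda>x. 1) z) = \<rho> (\<lambda>x. 1) z"
    using rho_mult[OF c1 c1 z] by simp
  have e1: "l2inner z (\<rho> (\<lambda>x. 1) z) = l2inner (\<rho> (\<lambda>x. 1) z) (\<rho> (\<lambda>x. 1) z)"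
    using rho_adj[OF c1 z l1] idem by simp
  have hreal: "(\<lambda>x. cnj (h x)) = h" unfolding h_def by simp
  have e2: "l2inner z (\<rho> h (\<rho> h z)) = l2inner (\<rho> h z) (\<rho> h z)"
    using rho_adj[OF ch z lh] hreal by simp
  have "l2inner z (\<rho> g z) = cnj c * l2inner z (\<rho> (\<lambda>x. 1) z) + cnj (-1) * l2inner z (\<rho> h (\<rho> h z))"
    unfolding eq1
    using l2inner_add_right[OF l2_scale[OF l1, of c] l2_scale[OF lhh, of "-1"] z]
      l2inner_scale_right[where w=z and c=c and a="\<rho> (\<lambda>x. 1) z"]
      l2inner_scale_right[where w=z and c="-1" and a="\<rho> h (\<rho> h z)"] by simp
  then have "complex_of_real ((l2norm (\<rho> f z))^2) =
      c * complex_of_real ((l2norm (\<rho> (\<lambda>x. 1) z))^2) - complex_of_real ((l2norm (\<rho> h z))^2)"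
    using eq2 e1 e2 l2inner_self[OF lf] l2inner_self[OF l1] l2inner_self[OF lh]
    unfolding c_def by (simp only: complex_cnj_complex_of_real) simp
  then have "complex_of_real ((l2norm (\<rho> f z))^2) =
      complex_of_real (K^2 * (l2norm (\<rho> (\<lambda>x. 1) z))^2 - (l2norm (\<rho> h z))^2)"
    unfolding c_def by (simp only: of_real_mult of_real_diff)
  then have "(l2norm (\<rho> f z))^2 = K^2 * (l2norm (\<rho> (\<lambda>x. 1) z))^2 - (l2norm (\<rho> h z))^2"
    using of_real_eq_iff by blast
  also have "\<dots> \<le> K^2 * (l2norm (\<rho> (\<lambda>x. 1) z))^2" by simp
  also have "\<dots> \<le> K^2 * (l2norm z)^2"
    using rho_one_contr[OF z] by (intro mult_left_mono power_mono) auto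
  also have "\<dots> = (K * l2norm z)^2" by (simp add: power_mult_distrib)
  finally show ?thesis
    by (rule power2_le_imp_le) (use K0 in simp)
qed

end

lemma l2_sum:
  assumes "finite S" "\<And>n. n \<in> S \<Longrightarrow> l2 (u n)"
  shows "l2 (\<lambda>i. \<Sum>n\<in>S. u n i) \<and> l2norm (\<lambda>i. \<Sum>n\<in>S. u n i) \<le> (\<Sum>n\<in>S. l2norm (u n))"
  using assms
proof (induction S rule: finite_induct)
  case empty
  then show ?case by (simp add: l2norm_def)
next
  case (insert a S)
  then have IH: "l2 (\<lambda>i. \<Sum>n\<in>S. u n i)" "l2norm (\<lambda>i. \<Sum>n\<in>S. u n i) \<le> (\<Sum>n\<in>S. l2norm (u n))"
    by auto
  have ua: "l2 (u a)" using insert by auto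
  have eq: "(\<lambda>i. \<Sum>n\<in>insert a S. u n i) = (\<lambda>i. u a i + (\<Sum>n\<in>S. u n i))"
    using insert by simp
  show ?case unfolding eq
    using l2_add[OF ua IH(1)] l2norm_triangle[OF ua IH(1)] IH(2) insert by simp
qed

lemma opnorm_le:
  assumes "0 \<le> B" "\<And>z. l2 z \<Longrightarrow> l2norm z \<le> 1 \<Longrightarrow> l2norm (T z) \<le> B"
  shows "opnorm T \<le> B"
  unfolding opnorm_def
proof (rule cSup_least)
  show "{l2norm (T z) |z. l2 z \<and> l2norm z \<le> 1} \<noteq> {}"
  proof -
    have "l2 (\<lambda>i. 0::complex)" "l2norm (\<lambda>i. 0::complex) \<le> 1" by (auto simp: l2norm_def)
    then show ?thesis by blast
  qed
qed (use assms in auto)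

lemma opnorm_ge:
  assumes "\<And>z. l2 z \<Longrightarrow> l2norm z \<le> 1 \<Longrightarrow> l2norm (T z) \<le> B" "l2 z" "l2norm z \<le> 1"
  shows "l2norm (T z) \<le> opnorm T"
  unfolding opnorm_def
  by (rule cSup_upper) (use assms in \<open>auto intro!: bdd_aboveI[of _ B]\<close>)

context rep begin

lemma V_pow: "l2 z \<Longrightarrow> l2 ((V ^^ n) z) \<and> l2norm ((V ^^ n) z) = l2norm z"
  by (induction n) (auto simp: l2_V V_iso)

lemma rep_poly_bound:
  assumes fs: "is_poly fs" and K: "\<And>n x. cmod (fs n x) \<le> K n" and z: "l2 z"
  shows "l2 (rep_poly \<rho> V fs z) \<and>
    l2norm (rep_poly \<rho> V fs z) \<le> (\<Sum>n\<in>{n. fs n \<noteq> (\<lambda>x. 0)}. K n) * l2norm z"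
proof -
  let ?S = "{n. fs n \<noteq> (\<lambda>x. 0)}"
  have fin: "finite ?S" and cont: "\<And>n. continuous_on UNIV (fs n)"
    using fs unfolding is_poly_def by auto
  have l: "l2 ((V ^^ n) (\<rho> (fs n) z))" for n
    using V_pow l2_rho[OF cont z] by blast
  have nrm: "l2norm ((V ^^ n) (\<rho> (fs n) z)) \<le> K n * l2norm z" for n
    using V_pow[OF l2_rho[OF cont z]] rho_bound[OF cont K z] by simp
  have "l2 (rep_poly \<rho> V fs z) \<and> l2norm (rep_poly \<rho> V fs z) \<le> (\<Sum>n\<in>?S. l2norm ((V ^^ n) (\<rho> (fs n) z)))"
    unfolding rep_poly_def using l2_sum[OF fin, of "\<lambda>n. (V ^^ n) (\<rho> (fs n) z)"] l by auto
  moreover have "(\<Sum>n\<in>?S. l2norm ((V ^^ n) (\<rho> (fs n) z))) \<le> (\<Sum>n\<in>?S. K n * l2norm z)"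
    by (rule sum_mono) (rule nrm)
  ultimately show ?thesis by (simp add: sum_distrib_right)
qed

lemma opnorm_rep_poly:
  assumes fs: "is_poly fs" and K: "\<And>n x. cmod (fs n x) \<le> K n"
  shows "opnorm (rep_poly \<rho> V fs) \<le> (\<Sum>n\<in>{n. fs n \<noteq> (\<lambda>x. 0)}. K n)"
proof (rule opnorm_le)
  have "0 \<le> K n" for n using K[of n undefined] norm_ge_zero order_trans by blast
  then show "0 \<le> (\<Sum>n\<in>{n. fs n \<noteq> (\<lambda>x. 0)}. K n)" by (simp add: sum_nonneg)
  fix z :: "'h \<Rightarrow> complex" assume z: "l2 z" "l2norm z \<le> 1"
  have "l2norm (rep_poly \<rho> V fs z) \<le> (\<Sum>n\<in>{n. fs n \<noteq> (\<lambda>x. 0)}. K n) * l2norm z"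
    using rep_poly_bound[OF fs K z(1)] by simp
  also have "\<dots> \<le> (\<Sum>n\<in>{n. fs n \<noteq> (\<lambda>x. 0)}. K n) * 1"
    by (rule mult_left_mono[OF z(2)]) fact
  finally show "l2norm (rep_poly \<rho> V fs z) \<le> (\<Sum>n\<in>{n. fs n \<noteq> (\<lambda>x. 0)}. K n)" by simp
qed

end

lemma poly_bounded:
  assumes "compact (UNIV :: 'x::topological_space set)" "is_poly (fs :: nat \<Rightarrow> 'x \<Rightarrow> complex)"
  shows "\<exists>K. \<forall>n x. cmod (fs n x) \<le> K n"
proof -
  have "\<exists>k. \<forall>x. cmod (fs n x) \<le> k" for n
  proof -
    have "continuous_on UNIV (fs n)" using assms(2) unfolding is_poly_def by auto
    then have "compact (fs n ` UNIV)" using assms(1) compact_continuous_image by blast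
    then have "bounded (fs n ` UNIV)" by (rule compact_imp_bounded)
    then show ?thesis unfolding bounded_iff by auto
  qed
  then show ?thesis by metis
qed

lemma univ_bdd:
  assumes "compact (UNIV :: 'x::topological_space set)" "is_poly (fs :: nat \<Rightarrow> 'x \<Rightarrow> complex)"
  shows "bdd_above {opnorm (rep_poly \<rho> V fs) | (\<rho> :: ('x \<Rightarrow> complex) \<Rightarrow> ('h \<Rightarrow> complex) \<Rightarrow> ('h \<Rightarrow> complex)) V.
            is_rep \<phi> \<rho> V}"
proof -
  obtain K where K: "\<And>n x. cmod (fs n x) \<le> K n" using poly_bounded[OF assms] by blast
  show ?thesis
    by (rule bdd_aboveI[of _ "\<Sum>n\<in>{n. fs n \<noteq> (\<lambda>x. 0)}. K n"])
      (auto intro: rep.opnorm_rep_poly[OF _ assms(2) K] simp: rep_def)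
qed

lemma univ_ge:
  assumes "compact (UNIV :: 'x::topological_space set)" "is_poly (fs :: nat \<Rightarrow> 'x \<Rightarrow> complex)"
    and "is_rep \<phi> (\<rho> :: ('x \<Rightarrow> complex) \<Rightarrow> ('h \<Rightarrow> complex) \<Rightarrow> ('h \<Rightarrow> complex)) V"
  shows "opnorm (rep_poly \<rho> V fs) \<le> univ_norm TYPE('h) \<phi> fs"
  unfolding univ_norm_def
  by (rule cSup_upper) (use assms univ_bdd[OF assms(1,2)] in auto)

definition ext :: "('a \<Rightarrow> 'h) \<Rightarrow> ('a \<Rightarrow> complex) \<Rightarrow> 'h \<Rightarrow> complex" where
  "ext g w = (\<lambda>h. if h \<in> range g then w (inv g h) else 0)"

definition outp :: "('a \<Rightarrow> 'h) \<Rightarrow> ('h \<Rightarrow> complex) \<Rightarrow> 'h \<Rightarrow> complex" where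
  "outp g z = (\<lambda>h. if h \<in> range g then 0 else z h)"

definition res :: "('a \<Rightarrow> 'h) \<Rightarrow> ('h \<Rightarrow> complex) \<Rightarrow> 'a \<Rightarrow> complex" where
  "res g z = (\<lambda>a. z (g a))"

lemma res_ext: "inj g \<Longrightarrow> res g (ext g w) = w"
  by (simp add: res_def ext_def)

lemma outp_ext: "outp g (ext g w) = (\<lambda>h. 0)"
  by (auto simp: outp_def ext_def)

lemma res_outp: "res g (outp g z) = (\<lambda>a. 0)"
  by (auto simp: outp_def res_def)

lemma z_split: "inj g \<Longrightarrow> z = (\<lambda>h. ext g (res g z) h + outp g z h)"
  by (auto simp: outp_def ext_def res_def f_inv_into_f)

lemma infsum_ext_gen:
  assumes "inj g" and that: "\<And>h. F h 0 = 0"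
  shows "infsum (\<lambda>h. F h (ext g w h)) UNIV = infsum (\<lambda>a. F (g a) (w a)) UNIV"
    and "(\<lambda>h. F h (ext g w h)) summable_on UNIV \<longleftrightarrow> (\<lambda>a. F (g a) (w a)) summable_on UNIV"
proof -
  have "infsum (\<lambda>h. F h (ext g w h)) UNIV = infsum (\<lambda>h. F h (ext g w h)) (range g)"
    by (rule infsum_cong_neutral) (auto simp: ext_def that)
  also have "\<dots> = infsum ((\<lambda>h. F h (ext g w h)) \<circ> g) UNIV"
    by (rule infsum_reindex) (use assms inj_on_subset in auto)
  also have "((\<lambda>h. F h (ext g w h)) \<circ> g) = (\<lambda>a. F (g a) (w a))"
    using assms by (auto simp: ext_def)
  finally show "infsum (\<lambda>h. F h (ext g w h)) UNIV = infsum (\<lambda>a. F (g a) (w a)) UNIV" .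
  have "(\<lambda>h. F h (ext g w h)) summable_on UNIV \<longleftrightarrow> (\<lambda>h. F h (ext g w h)) summable_on (range g)"
    by (rule summable_on_cong_neutral) (auto simp: ext_def that)
  also have "\<dots> \<longleftrightarrow> ((\<lambda>h. F h (ext g w h)) \<circ> g) summable_on UNIV"
    by (rule summable_on_reindex) (use assms inj_on_subset in auto)
  also have "((\<lambda>h. F h (ext g w h)) \<circ> g) = (\<lambda>a. F (g a) (w a))"
    using assms by (auto simp: ext_def)
  finally show "(\<lambda>h. F h (ext g w h)) summable_on UNIV \<longleftrightarrow> (\<lambda>a. F (g a) (w a)) summable_on UNIV" .
qed

lemma ext_l2:
  assumes "inj g" "l2 w"
  shows "l2 (ext g w)" "l2norm (ext g w) = l2norm w"
proof -
  show "l2 (ext g w)" using assms unfolding l2_def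
    using infsum_ext_gen(2)[OF assms(1), of "\<lambda>h x. (cmod x)^2"] by simp
  show "l2norm (ext g w) = l2norm w" unfolding l2norm_def
    using infsum_ext_gen(1)[OF assms(1), of "\<lambda>h x. (cmod x)^2"] by simp
qed

lemma l2inner_ext_left:
  assumes "inj g"
  shows "l2inner (ext g a) z = l2inner a (res g z)"
  unfolding l2inner_def res_def
  using infsum_ext_gen(1)[OF assms, of "\<lambda>h x. x * cnj (z h)"] by simp

lemma l2inner_ext_right:
  assumes "inj g"
  shows "l2inner z (ext g a) = l2inner (res g z) a"
  unfolding l2inner_def res_def
  using infsum_ext_gen(1)[OF assms, of "\<lambda>h x. z h * cnj x"] by simp

lemma outp_l2: assumes "l2 z" shows "l2 (outp g z)"
  using assms unfolding l2_def
  by (rule summable_on_comparison_test) (auto simp: outp_def)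

lemma pythag:
  assumes "l2 x" "l2 y" "\<And>i. x i * cnj (y i) = 0"
  shows "(l2norm (\<lambda>i. x i + y i))^2 = (l2norm x)^2 + (l2norm y)^2"
proof -
  have xy: "l2inner x y = 0" unfolding l2inner_def assms(3) by simp
  have yx: "l2inner y x = 0" using l2inner_cnj[of y x] xy by simp
  have "l2inner (\<lambda>i. x i + y i) (\<lambda>i. x i + y i) = l2inner x x + l2inner x y + (l2inner y x + l2inner y y)"
    using l2inner_add_left[OF assms(1,2) l2_add[OF assms(1,2)]] l2inner_add_right[OF assms(1,2) assms(1)]
      l2inner_add_right[OF assms(1,2) assms(2)] by simp
  then have "complex_of_real ((l2norm (\<lambda>i. x i + y i))^2) = complex_of_real ((l2norm x)^2 + (l2norm y)^2)"
    using xy yx l2inner_self[OF l2_add[OF assms(1,2)]] l2inner_self[OF assms(1)] l2inner_self[OF assms(2)]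
    by (simp only: of_real_add) simp
  then show ?thesis using of_real_eq_iff by blast
qed

lemma ext_outp_orth: "ext g a i * cnj (outp g z i) = 0"
  by (auto simp: ext_def outp_def)

lemma res_l2:
  assumes "inj g" "l2 z"
  shows "l2 (res g z)" "l2norm (res g z) \<le> l2norm z"
proof -
  have "(\<lambda>h. (cmod (z h))^2) summable_on range g"
    using assms(2) unfolding l2_def by (rule summable_on_subset_banach) auto
  then show lr: "l2 (res g z)" unfolding l2_def res_def
    using summable_on_reindex[of g UNIV "\<lambda>h. (cmod (z h))^2"] assms(1) by (simp add: o_def)
  have "(l2norm z)^2 = (l2norm (ext g (res g z)))^2 + (l2norm (outp g z))^2"
    apply (subst z_split[OF assms(1), of z])
    by (rule pythag[OF ext_l2(1)[OF assms(1) lr] outp_l2[OF assms(2)] ext_outp_orth])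
  then have "(l2norm (res g z))^2 \<le> (l2norm z)^2"
    using ext_l2(2)[OF assms(1) lr] by simp
  then show "l2norm (res g z) \<le> l2norm z"
    using power2_le_imp_le l2norm_nonneg by blast
qed

lemma res_add: "res g (\<lambda>h. z h + w h) = (\<lambda>a. res g z a + res g w a)"
  by (simp add: res_def)
lemma res_scale: "res g (\<lambda>h. c * z h) = (\<lambda>a. c * res g z a)"
  by (simp add: res_def)
lemma ext_add: "ext g (\<lambda>a. p a + q a) = (\<lambda>h. ext g p h + ext g q h)"
  by (auto simp: ext_def)
lemma ext_scale: "ext g (\<lambda>a. c * p a) = (\<lambda>h. c * ext g p h)"
  by (auto simp: ext_def)
lemma outp_add: "outp g (\<lambda>h. z h + w h) = (\<lambda>h. outp g z h + outp g w h)"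
  by (auto simp: outp_def)
lemma outp_scale: "outp g (\<lambda>h. c * z h) = (\<lambda>h. c * outp g z h)"
  by (auto simp: outp_def)

lemma bop_transport:
  assumes g: "inj g" and T: "bounded_op T"
  shows "bounded_op (\<lambda>z. ext g (T (res g z)))"
proof -
  have Tl: "\<And>z. l2 z \<Longrightarrow> l2 (T z)"
    and Ta: "\<And>z w. l2 z \<Longrightarrow> l2 w \<Longrightarrow> T (\<lambda>i. z i + w i) = (\<lambda>i. T z i + T w i)"
    and Ts: "\<And>c z. l2 z \<Longrightarrow> T (\<lambda>i. c * z i) = (\<lambda>i. c * T z i)"
    using T unfolding bounded_op_def by blast+
  obtain C where C: "\<And>z. l2 z \<Longrightarrow> l2norm (T z) \<le> C * l2norm z"
    using T unfolding bounded_op_def by blast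
  show ?thesis unfolding bounded_op_def
  proof (intro conjI allI impI)
    fix z :: "'b \<Rightarrow> complex" assume z: "l2 z"
    show "l2 (ext g (T (res g z)))" by (rule ext_l2(1)[OF g Tl[OF res_l2(1)[OF g z]]])
  next
    fix z w :: "'b \<Rightarrow> complex" assume z: "l2 z" and w: "l2 w"
    show "ext g (T (res g (\<lambda>i. z i + w i))) = (\<lambda>i. ext g (T (res g z)) i + ext g (T (res g w)) i)"
      unfolding res_add Ta[OF res_l2(1)[OF g z] res_l2(1)[OF g w]] ext_add ..
  next
    fix c and z :: "'b \<Rightarrow> complex" assume z: "l2 z"
    show "ext g (T (res g (\<lambda>i. c * z i))) = (\<lambda>i. c * ext g (T (res g z)) i)"
      unfolding res_scale Ts[OF res_l2(1)[OF g z]] ext_scale ..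
  next
    show "\<exists>C. \<forall>z. l2 z \<longrightarrow> l2norm (ext g (T (res g z))) \<le> C * l2norm z"
    proof (intro exI[of _ "max C 0"] allI impI)
      fix z :: "'b \<Rightarrow> complex" assume z: "l2 z"
      have lr: "l2 (res g z)" by (rule res_l2(1)[OF g z])
      have "l2norm (ext g (T (res g z))) = l2norm (T (res g z))"
        by (rule ext_l2(2)[OF g Tl[OF lr]])
      also have "\<dots> \<le> C * l2norm (res g z)" by (rule C[OF lr])
      also have "\<dots> \<le> max C 0 * l2norm (res g z)" by (intro mult_right_mono) auto
      also have "\<dots> \<le> max C 0 * l2norm z" by (intro mult_left_mono res_l2(2)[OF g z]) auto
      finally show "l2norm (ext g (T (res g z))) \<le> max C 0 * l2norm z" .
    qed
  qed
qed

definition rho_t :: "('a \<Rightarrow> 'h) \<Rightarrow> (('x \<Rightarrow> complex) \<Rightarrow> ('a \<Rightarrow> complex) \<Rightarrow> ('a \<Rightarrow> complex)) \<Rightarrow>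
    ('x \<Rightarrow> complex) \<Rightarrow> ('h \<Rightarrow> complex) \<Rightarrow> ('h \<Rightarrow> complex)" where
  "rho_t g \<rho> = (\<lambda>f z. ext g (\<rho> f (res g z)))"

definition V_t :: "('a \<Rightarrow> 'h) \<Rightarrow> (('a \<Rightarrow> complex) \<Rightarrow> ('a \<Rightarrow> complex)) \<Rightarrow>
    ('h \<Rightarrow> complex) \<Rightarrow> ('h \<Rightarrow> complex)" where
  "V_t g V = (\<lambda>z. (\<lambda>h. ext g (V (res g z)) h + outp g z h))"

lemma transport:
  fixes \<phi> :: "'x::topological_space \<Rightarrow> 'x" and \<rho> :: "('x \<Rightarrow> complex) \<Rightarrow> ('a \<Rightarrow> complex) \<Rightarrow> ('a \<Rightarrow> complex)"
    and g :: "'a \<Rightarrow> 'h"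
  assumes g: "inj g" and R: "is_rep \<phi> \<rho> V"
  shows "is_rep \<phi> (rho_t g \<rho>) (V_t g V)"
proof -
  interpret rep \<phi> \<rho> V by unfold_locales (rule R)
  have resl: "\<And>z. l2 z \<Longrightarrow> l2 (res g z)" using res_l2(1)[OF g] by blast
  have Vl2: "l2 (V_t g V z)" if z: "l2 z" for z
    unfolding V_t_def by (intro l2_add ext_l2(1)[OF g] l2_V resl outp_l2 z)
  have Viso: "l2norm (V_t g V z) = l2norm z" if z: "l2 z" for z
  proof -
    have lr: "l2 (res g z)" by (rule resl[OF z])
    have "(l2norm (V_t g V z))^2 = (l2norm (ext g (V (res g z))))^2 + (l2norm (outp g z))^2"
      unfolding V_t_def
      by (rule pythag[OF ext_l2(1)[OF g l2_V[OF lr]] outp_l2[OF z] ext_outp_orth])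
    also have "\<dots> = (l2norm (ext g (res g z)))^2 + (l2norm (outp g z))^2"
      using ext_l2(2)[OF g l2_V[OF lr]] ext_l2(2)[OF g lr] V_iso[OF lr] by simp
    also have "\<dots> = (l2norm z)^2"
      apply (subst (3) z_split[OF g, of z])
      by (rule pythag[OF ext_l2(1)[OF g lr] outp_l2[OF z] ext_outp_orth, symmetric])
    finally show ?thesis using l2norm_nonneg power2_eq_imp_eq by blast
  qed
  have Vbop: "bounded_op (V_t g V)" unfolding bounded_op_def
  proof (intro conjI allI impI)
    fix z :: "'h \<Rightarrow> complex" assume "l2 z" then show "l2 (V_t g V z)" by (rule Vl2)
  next
    fix z w :: "'h \<Rightarrow> complex" assume z: "l2 z" and w: "l2 w"
    show "V_t g V (\<lambda>i. z i + w i) = (\<lambda>i. V_t g V z i + V_t g V w i)"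
      unfolding V_t_def res_add V_add[OF resl[OF z] resl[OF w]] ext_add outp_add
      by (simp add: algebra_simps)
  next
    fix c and z :: "'h \<Rightarrow> complex" assume z: "l2 z"
    show "V_t g V (\<lambda>i. c * z i) = (\<lambda>i. c * V_t g V z i)"
      unfolding V_t_def res_scale V_scale[OF resl[OF z]] ext_scale outp_scale
      by (simp add: algebra_simps)
  next
    show "\<exists>C. \<forall>z. l2 z \<longrightarrow> l2norm (V_t g V z) \<le> C * l2norm z"
      by (intro exI[of _ 1]) (simp add: Viso)
  qed
  have resV: "res g (V_t g V z) = V (res g z)" for z
    unfolding V_t_def res_def using g by (auto simp: ext_def outp_def)
  show ?thesis unfolding is_rep_def
  proof (intro conjI allI impI)
    fix f :: "'x \<Rightarrow> complex" assume f: "continuous_on UNIV f"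
    show "bounded_op (rho_t g \<rho> f)" unfolding rho_t_def
      by (rule bop_transport[OF g bop[OF f]])
  next
    fix f h :: "'x \<Rightarrow> complex" and z :: "'h \<Rightarrow> complex"
    assume f: "continuous_on UNIV f" and h: "continuous_on UNIV h" and z: "l2 z"
    show "rho_t g \<rho> (\<lambda>x. f x + h x) z = (\<lambda>i. rho_t g \<rho> f z i + rho_t g \<rho> h z i)"
      unfolding rho_t_def rho_add[OF f h resl[OF z]] ext_add ..
  next
    fix c and f :: "'x \<Rightarrow> complex" and z :: "'h \<Rightarrow> complex"
    assume f: "continuous_on UNIV f" and z: "l2 z"
    show "rho_t g \<rho> (\<lambda>x. c * f x) z = (\<lambda>i. c * rho_t g \<rho> f z i)"
      unfolding rho_t_def rho_scale[OF f resl[OF z]] ext_scale ..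
  next
    fix f h :: "'x \<Rightarrow> complex" and z :: "'h \<Rightarrow> complex"
    assume f: "continuous_on UNIV f" and h: "continuous_on UNIV h" and z: "l2 z"
    show "rho_t g \<rho> (\<lambda>x. f x * h x) z = rho_t g \<rho> f (rho_t g \<rho> h z)"
      unfolding rho_t_def rho_mult[OF f h resl[OF z]] res_ext[OF g] ..
  next
    fix f :: "'x \<Rightarrow> complex" and z w :: "'h \<Rightarrow> complex"
    assume f: "continuous_on UNIV f" and z: "l2 z" and w: "l2 w"
    show "l2inner (rho_t g \<rho> f z) w = l2inner z (rho_t g \<rho> (\<lambda>x. cnj (f x)) w)"
      unfolding rho_t_def l2inner_ext_left[OF g] l2inner_ext_right[OF g]
      by (rule rho_adj[OF f resl[OF z] resl[OF w]])
  next
    show "bounded_op (V_t g V)" by (rule Vbop)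
  next
    fix z :: "'h \<Rightarrow> complex" assume "l2 z" then show "l2norm (V_t g V z) = l2norm z" by (rule Viso)
  next
    fix f :: "'x \<Rightarrow> complex" and z :: "'h \<Rightarrow> complex"
    assume f: "continuous_on UNIV f" and z: "l2 z"
    have "rho_t g \<rho> f (V_t g V z) = ext g (V (\<rho> (\<lambda>x. f (\<phi> x)) (res g z)))"
      unfolding rho_t_def resV using isrep f resl[OF z] unfolding is_rep_def by metis
    also have "\<dots> = V_t g V (rho_t g \<rho> (\<lambda>x. f (\<phi> x)) z)"
      unfolding V_t_def rho_t_def res_ext[OF g] outp_ext by simp
    finally show "rho_t g \<rho> f (V_t g V z) = V_t g V (rho_t g \<rho> (\<lambda>x. f (\<phi> x)) z)" .
  qed
qed

lemma Vt_pow_ext: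
  assumes g: "inj g"
  shows "(V_t g V ^^ n) (ext g u) = ext g ((V ^^ n) u)"
proof (induction n)
  case 0 then show ?case by simp
next
  case (Suc n)
  then show ?case by (simp add: V_t_def res_ext[OF g] outp_ext)
qed

lemma rep_poly_transport:
  assumes g: "inj g" and fin: "finite {n. fs n \<noteq> (\<lambda>x. 0)}"
  shows "rep_poly (rho_t g \<rho>) (V_t g V) fs (ext g w) = ext g (rep_poly \<rho> V fs w)"
  unfolding rep_poly_def rho_t_def res_ext[OF g] Vt_pow_ext[OF g]
  by (auto simp: ext_def)

lemma opnorm_nonneg:
  assumes "\<And>z. l2 z \<Longrightarrow> l2norm z \<le> 1 \<Longrightarrow> l2norm (T z) \<le> B"
  shows "0 \<le> opnorm T"
proof -
  have "l2norm (T (\<lambda>i. 0)) \<le> opnorm T"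
    by (rule opnorm_ge[OF assms]) (auto simp: l2norm_def)
  then show ?thesis using l2norm_nonneg order_trans by blast
qed

lemma rep_opnorm_bounded:
  fixes \<rho> :: "('x::topological_space \<Rightarrow> complex) \<Rightarrow> ('a \<Rightarrow> complex) \<Rightarrow> ('a \<Rightarrow> complex)"
  assumes "compact (UNIV :: 'x set)" "is_poly (fs :: nat \<Rightarrow> 'x \<Rightarrow> complex)"
    and "is_rep \<phi> \<rho> V"
  shows "\<exists>B. \<forall>z. l2 z \<longrightarrow> l2norm z \<le> 1 \<longrightarrow> l2 (rep_poly \<rho> V fs z) \<and> l2norm (rep_poly \<rho> V fs z) \<le> B"
proof -
  obtain K where K: "\<And>n x. cmod (fs n x) \<le> K n" using poly_bounded[OF assms(1,2)] by blast
  interpret rep \<phi> \<rho> V by unfold_locales (rule assms(3))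
  have "0 \<le> K n" for n using K[of n undefined] norm_ge_zero order_trans by blast
  then have S0: "0 \<le> (\<Sum>n\<in>{n. fs n \<noteq> (\<lambda>x. 0)}. K n)" by (simp add: sum_nonneg)
  show ?thesis
  proof (intro exI[of _ "\<Sum>n\<in>{n. fs n \<noteq> (\<lambda>x. 0)}. K n"] allI impI)
    fix z :: "'a \<Rightarrow> complex" assume z: "l2 z" "l2norm z \<le> 1"
    have *: "l2 (rep_poly \<rho> V fs z) \<and>
      l2norm (rep_poly \<rho> V fs z) \<le> (\<Sum>n\<in>{n. fs n \<noteq> (\<lambda>x. 0)}. K n) * l2norm z"
      by (rule rep_poly_bound[OF assms(2) K z(1)])
    moreover have "(\<Sum>n\<in>{n. fs n \<noteq> (\<lambda>x. 0)}. K n) * l2norm z \<le> (\<Sum>n\<in>{n. fs n \<noteq> (\<lambda>x. 0)}. K n)"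
      using mult_left_mono[OF z(2) S0] by simp
    ultimately show "l2 (rep_poly \<rho> V fs z) \<and> l2norm (rep_poly \<rho> V fs z) \<le> (\<Sum>n\<in>{n. fs n \<noteq> (\<lambda>x. 0)}. K n)"
      by auto
  qed
qed

lemma opnorm_transport_le:
  fixes \<phi> :: "'x::topological_space \<Rightarrow> 'x" and \<rho> :: "('x \<Rightarrow> complex) \<Rightarrow> ('a \<Rightarrow> complex) \<Rightarrow> ('a \<Rightarrow> complex)"
    and g :: "'a \<Rightarrow> 'h"
  assumes cpt: "compact (UNIV :: 'x set)" and fs: "is_poly fs" and g: "inj g" and R: "is_rep \<phi> \<rho> V"
  shows "opnorm (rep_poly \<rho> V fs) \<le> opnorm (rep_poly (rho_t g \<rho>) (V_t g V) fs)"
proof -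
  have Rt: "is_rep \<phi> (rho_t g \<rho>) (V_t g V)" by (rule transport[OF g R])
  obtain B where B: "\<And>z. l2 z \<Longrightarrow> l2norm z \<le> 1 \<Longrightarrow> l2 (rep_poly (rho_t g \<rho>) (V_t g V) fs z) \<and>
      l2norm (rep_poly (rho_t g \<rho>) (V_t g V) fs z) \<le> B"
    using rep_opnorm_bounded[OF cpt fs Rt] by blast
  obtain B' where B': "\<And>z. l2 z \<Longrightarrow> l2norm z \<le> 1 \<Longrightarrow> l2 (rep_poly \<rho> V fs z) \<and>
      l2norm (rep_poly \<rho> V fs z) \<le> B'"
    using rep_opnorm_bounded[OF cpt fs R] by blast
  have fin: "finite {n. fs n \<noteq> (\<lambda>x. 0)}" using fs unfolding is_poly_def by auto
  show ?thesis
  proof (rule opnorm_le)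
    show "0 \<le> opnorm (rep_poly (rho_t g \<rho>) (V_t g V) fs)"
      by (rule opnorm_nonneg[of _ B]) (use B in blast)
    fix w :: "'a \<Rightarrow> complex" assume w: "l2 w" "l2norm w \<le> 1"
    have "l2norm (rep_poly \<rho> V fs w) = l2norm (ext g (rep_poly \<rho> V fs w))"
      using ext_l2(2)[OF g] B'[OF w] by simp
    also have "\<dots> = l2norm (rep_poly (rho_t g \<rho>) (V_t g V) fs (ext g w))"
      by (simp add: rep_poly_transport[OF g fin])
    also have "\<dots> \<le> opnorm (rep_poly (rho_t g \<rho>) (V_t g V) fs)"
      by (rule opnorm_ge[of _ B]) (use B ext_l2[OF g w(1)] w(2) in auto)
    finally show "l2norm (rep_poly \<rho> V fs w) \<le> opnorm (rep_poly (rho_t g \<rho>) (V_t g V) fs)" .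
  qed
qed

lemma rep_le_univ:
  fixes \<phi> :: "'x::topological_space \<Rightarrow> 'x" and \<rho> :: "('x \<Rightarrow> complex) \<Rightarrow> (nat \<Rightarrow> complex) \<Rightarrow> (nat \<Rightarrow> complex)"
  assumes cpt: "compact (UNIV :: 'x set)" and fs: "is_poly fs" and inf: "infinite (UNIV :: 'h set)"
    and R: "is_rep \<phi> \<rho> V"
  shows "opnorm (rep_poly \<rho> V fs) \<le> univ_norm TYPE('h) \<phi> fs"
proof -
  obtain g :: "nat \<Rightarrow> 'h" where g: "inj g"
    using iffD1[OF infinite_iff_countable_subset inf] by blast
  have "opnorm (rep_poly \<rho> V fs) \<le> opnorm (rep_poly (rho_t g \<rho>) (V_t g V) fs)"
    by (rule opnorm_transport_le[OF cpt fs g R])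
  also have "\<dots> \<le> univ_norm TYPE('h) \<phi> fs"
    by (rule univ_ge[OF cpt fs transport[OF g R]])
  finally show ?thesis .
qed

lemma shift_ext: "shift = ext Suc"
proof (intro ext)
  fix z :: "nat \<Rightarrow> complex" and h :: nat
  show "shift z h = ext Suc z h"
  proof (cases h)
    case 0 then show ?thesis by (simp add: shift_def ext_def)
  next
    case (Suc k)
    then have "h \<in> range Suc" by simp
    then show ?thesis using Suc by (simp add: shift_def ext_def)
  qed
qed

lemma bop_ext:
  fixes g :: "'a \<Rightarrow> 'a"
  assumes g: "inj g"
  shows "bounded_op (ext g)"
  unfolding bounded_op_def
proof (intro conjI allI impI exI[of _ 1])
  fix z :: "'a \<Rightarrow> complex" assume z: "l2 z"
  show "l2 (ext g z)" by (rule ext_l2(1)[OF g z])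
  show "l2norm (ext g z) \<le> 1 * l2norm z" using ext_l2(2)[OF g z] by simp
next
  fix z w :: "'a \<Rightarrow> complex"
  show "ext g (\<lambda>i. z i + w i) = (\<lambda>i. ext g z i + ext g w i)" by (rule ext_add)
next
  fix c and z :: "'a \<Rightarrow> complex"
  show "ext g (\<lambda>i. c * z i) = (\<lambda>i. c * ext g z i)" by (rule ext_scale)
qed

lemma orbit_bop:
  assumes f: "\<And>x. cmod (f x) \<le> K"
  shows "bounded_op (orbit_mult \<phi> y f)"
proof -
  have K0: "0 \<le> K" using f[of undefined] norm_ge_zero order_trans by blast
  have le: "(cmod (orbit_mult \<phi> y f z i))^2 \<le> K^2 * (cmod (z i))^2" for z i
  proof -
    have "cmod (orbit_mult \<phi> y f z i) \<le> K * cmod (z i)"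
      unfolding orbit_mult_def norm_mult by (intro mult_right_mono f) auto
    then have "(cmod (orbit_mult \<phi> y f z i))^2 \<le> (K * cmod (z i))^2"
      by (intro power_mono) auto
    then show ?thesis by (simp add: power_mult_distrib)
  qed
  have l2o: "l2 (orbit_mult \<phi> y f z)" if z: "l2 z" for z
  proof -
    have "(\<lambda>i. K^2 * (cmod (z i))^2) summable_on UNIV"
      using z unfolding l2_def by (rule summable_on_cmult_right)
    then show ?thesis unfolding l2_def
      by (rule summable_on_comparison_test) (use le in auto)
  qed
  show ?thesis unfolding bounded_op_def
  proof (intro conjI allI impI exI[of _ K])
    fix z :: "nat \<Rightarrow> complex" assume "l2 z" then show "l2 (orbit_mult \<phi> y f z)" by (rule l2o)
  next
    fix z w :: "nat \<Rightarrow> complex"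
    show "orbit_mult \<phi> y f (\<lambda>i. z i + w i) = (\<lambda>i. orbit_mult \<phi> y f z i + orbit_mult \<phi> y f w i)"
      by (simp add: orbit_mult_def distrib_left)
  next
    fix c and z :: "nat \<Rightarrow> complex"
    show "orbit_mult \<phi> y f (\<lambda>i. c * z i) = (\<lambda>i. c * orbit_mult \<phi> y f z i)"
      by (simp add: orbit_mult_def mult.left_commute)
  next
    fix z :: "nat \<Rightarrow> complex" assume z: "l2 z"
    have s: "(\<lambda>i. K^2 * (cmod (z i))^2) summable_on UNIV"
      using z unfolding l2_def by (rule summable_on_cmult_right)
    have "(\<Sum>\<^sub>\<infinity>i. (cmod (orbit_mult \<phi> y f z i))^2) \<le> (\<Sum>\<^sub>\<infinity>i. K^2 * (cmod (z i))^2)"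
      by (rule infsum_mono[OF l2o[OF z, unfolded l2_def] s le])
    also have "\<dots> = K^2 * (\<Sum>\<^sub>\<infinity>i. (cmod (z i))^2)" by (rule infsum_cmult_right') 
    finally have "(l2norm (orbit_mult \<phi> y f z))^2 \<le> K^2 * (l2norm z)^2"
      unfolding l2norm_sq .
    then have "(l2norm (orbit_mult \<phi> y f z))^2 \<le> (K * l2norm z)^2"
      by (simp add: power_mult_distrib)
    then show "l2norm (orbit_mult \<phi> y f z) \<le> K * l2norm z"
      by (rule power2_le_imp_le) (use K0 in simp)
  qed
qed

lemma pi_rep:
  fixes \<phi> :: "'x::topological_space \<Rightarrow> 'x"
  assumes cpt: "compact (UNIV :: 'x set)"
  shows "is_rep \<phi> (orbit_mult \<phi> y) shift"
  unfolding is_rep_def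
proof (intro conjI allI impI)
  fix f :: "'x \<Rightarrow> complex" assume f: "continuous_on UNIV f"
  have "compact (f ` UNIV)" by (rule compact_continuous_image[OF f cpt])
  then have "bounded (f ` UNIV)" by (rule compact_imp_bounded)
  then obtain K where "\<forall>x\<in>f ` UNIV. norm x \<le> K" unfolding bounded_iff by blast
  then have "\<And>x. cmod (f x) \<le> K" by simp
  then show "bounded_op (orbit_mult \<phi> y f)" by (rule orbit_bop)
next
  fix f g :: "'x \<Rightarrow> complex" and z :: "nat \<Rightarrow> complex"
  show "orbit_mult \<phi> y (\<lambda>x. f x + g x) z = (\<lambda>i. orbit_mult \<phi> y f z i + orbit_mult \<phi> y g z i)"
    by (simp add: orbit_mult_def distrib_right)
next
  fix c and f :: "'x \<Rightarrow> complex" and z :: "nat \<Rightarrow> complex"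
  show "orbit_mult \<phi> y (\<lambda>x. c * f x) z = (\<lambda>i. c * orbit_mult \<phi> y f z i)"
    by (simp add: orbit_mult_def mult.assoc)
next
  fix f g :: "'x \<Rightarrow> complex" and z :: "nat \<Rightarrow> complex"
  show "orbit_mult \<phi> y (\<lambda>x. f x * g x) z = orbit_mult \<phi> y f (orbit_mult \<phi> y g z)"
    by (simp add: orbit_mult_def mult.assoc)
next
  fix f :: "'x \<Rightarrow> complex" and z w :: "nat \<Rightarrow> complex"
  show "l2inner (orbit_mult \<phi> y f z) w = l2inner z (orbit_mult \<phi> y (\<lambda>x. cnj (f x)) w)"
    unfolding orbit_mult_def l2inner_def by (simp add: ac_simps)
next
  show "bounded_op shift" unfolding shift_ext
    by (rule bop_ext[OF inj_Suc])
next
  fix z :: "nat \<Rightarrow> complex" assume "l2 z"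
  then show "l2norm (shift z) = l2norm z" unfolding shift_ext by (rule ext_l2(2)[OF inj_Suc])
next
  fix f :: "'x \<Rightarrow> complex" and z :: "nat \<Rightarrow> complex"
  show "orbit_mult \<phi> y f (shift z) = shift (orbit_mult \<phi> y (\<lambda>x. f (\<phi> x)) z)"
  proof
    fix i show "orbit_mult \<phi> y f (shift z) i = shift (orbit_mult \<phi> y (\<lambda>x. f (\<phi> x)) z) i"
      by (cases i) (simp_all add: orbit_mult_def shift_def)
  qed
qed

lemma period_props:
  assumes "periodic_pt \<phi> y"
  shows "period \<phi> y > 0" "(\<phi> ^^ period \<phi> y) y = y"
proof -
  obtain q where "q > 0 \<and> (\<phi> ^^ q) y = y" using assms unfolding periodic_pt_def by blast
  then have "period \<phi> y > 0 \<and> (\<phi> ^^ period \<phi> y) y = y"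
    unfolding period_def by (rule LeastI)
  then show "period \<phi> y > 0" "(\<phi> ^^ period \<phi> y) y = y" by auto
qed

lemma funpow_mult_period:
  assumes "(\<phi> ^^ p) y = y"
  shows "(\<phi> ^^ (k * p)) y = y"
proof (induction k)
  case 0 then show ?case by simp
next
  case (Suc k)
  have "(\<phi> ^^ (Suc k * p)) y = (\<phi> ^^ p) ((\<phi> ^^ (k * p)) y)"
    by (simp add: funpow_add)
  then show ?case using Suc assms by simp
qed

lemma funpow_mod_period:
  assumes "(\<phi> ^^ p) y = y"
  shows "(\<phi> ^^ i) y = (\<phi> ^^ (i mod p)) y"
proof -
  have e: "i mod p + (i div p) * p = i" by simp
  have "(\<phi> ^^ (i mod p + (i div p) * p)) y = (\<phi> ^^ (i mod p)) ((\<phi> ^^ ((i div p) * p)) y)"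
    by (simp only: funpow_add comp_apply)
  then have "(\<phi> ^^ i) y = (\<phi> ^^ (i mod p)) ((\<phi> ^^ ((i div p) * p)) y)"
    unfolding e .
  then show ?thesis using funpow_mult_period[OF assms] by simp
qed

lemma shift_app: "shift w 0 = 0" "shift w (Suc j) = w j"
  by (simp_all add: shift_def)

lemma cyc_app: "cyc p l w i = l * w ((i + p - 1) mod p)"
  by (simp add: cyc_def)

lemma shift_pow: "(shift ^^ n) z i = (if n \<le> i then z (i - n) else 0)"
proof (induction n arbitrary: i)
  case 0 then show ?case by simp
next
  case (Suc n)
  have "(shift ^^ Suc n) z i = shift ((shift ^^ n) z) i" by simp
  then show ?case by (cases i) (auto simp: shift_app Suc)
qed

lemma cyc_pow: "i < p \<Longrightarrow> (cyc p l ^^ n) z i = l ^ n * z ((i + n * (p - 1)) mod p)"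
proof (induction n arbitrary: i)
  case 0 then show ?case by simp
next
  case (Suc n)
  have ip: "(i + p - 1) mod p < p" using Suc.prems by simp
  have "(cyc p l ^^ Suc n) z i = cyc p l ((cyc p l ^^ n) z) i" by simp
  also have "\<dots> = l * (l ^ n * z (((i + p - 1) mod p + n * (p - 1)) mod p))"
    by (simp only: cyc_app Suc.IH[OF ip])
  also have "((i + p - 1) mod p + n * (p - 1)) mod p = (i + Suc n * (p - 1)) mod p"
  proof -
    have "((i + p - 1) mod p + n * (p - 1)) mod p = (i + p - 1 + n * (p - 1)) mod p"
      by (simp add: mod_add_left_eq)
    also have "i + p - 1 + n * (p - 1) = i + Suc n * (p - 1)"
    proof (cases p)
      case 0 then show ?thesis using Suc.prems by simp
    next
      case (Suc q) then show ?thesis by simp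
    qed
    finally show ?thesis .
  qed
  finally show ?case by simp
qed

lemma shift_diff: "shift (\<lambda>i. a i - b i) = (\<lambda>i. shift a i - shift b i)"
  by (auto simp: shift_def)

lemma cyc_diff: "cyc p l (\<lambda>i. a i - b i) = (\<lambda>i. cyc p l a i - cyc p l b i)"
  by (auto simp: cyc_def algebra_simps)

lemma pow_diff:
  fixes V :: "(nat \<Rightarrow> complex) \<Rightarrow> (nat \<Rightarrow> complex)"
  assumes "\<And>a b. V (\<lambda>i. a i - b i) = (\<lambda>i. V a i - V b i)"
  shows "(V ^^ n) (\<lambda>i. a i - b i) = (\<lambda>i. (V ^^ n) a i - (V ^^ n) b i)"
proof (induction n)
  case 0 show ?case by simp
next
  case (Suc n)
  have "(V ^^ Suc n) (\<lambda>i. a i - b i) = V ((V ^^ n) (\<lambda>i. a i - b i))" by simp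
  also have "\<dots> = V (\<lambda>i. (V ^^ n) a i - (V ^^ n) b i)" by (simp only: Suc)
  also have "\<dots> = (\<lambda>i. V ((V ^^ n) a) i - V ((V ^^ n) b) i)" by (rule assms)
  finally show ?case by simp
qed

lemma pow_zero:
  fixes V :: "(nat \<Rightarrow> complex) \<Rightarrow> (nat \<Rightarrow> complex)"
  assumes "\<And>a b. V (\<lambda>i. a i - b i) = (\<lambda>i. V a i - V b i)"
  shows "(V ^^ n) (\<lambda>i. 0) = (\<lambda>i. 0)"
proof -
  have V0: "V (\<lambda>i. 0) = (\<lambda>i. 0)" using assms[of "\<lambda>i. 0" "\<lambda>i. 0"] by simp
  show ?thesis by (induction n) (simp_all add: V0)
qed

lemma rep_poly_supset:
  fixes V :: "(nat \<Rightarrow> complex) \<Rightarrow> (nat \<Rightarrow> complex)"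
  assumes V: "\<And>a b. V (\<lambda>i. a i - b i) = (\<lambda>i. V a i - V b i)"
    and T: "finite T" "{n. fs n \<noteq> (\<lambda>x. 0)} \<subseteq> T"
  shows "rep_poly (orbit_mult \<phi> y) V fs z = (\<lambda>i. \<Sum>n\<in>T. (V ^^ n) (orbit_mult \<phi> y (fs n) z) i)"
  unfolding rep_poly_def
proof
  fix i
  show "(\<Sum>n\<in>{n. fs n \<noteq> (\<lambda>x. 0)}. (V ^^ n) (orbit_mult \<phi> y (fs n) z) i) =
        (\<Sum>n\<in>T. (V ^^ n) (orbit_mult \<phi> y (fs n) z) i)"
  proof (rule sum.mono_neutral_left[OF T])
    show "\<forall>n\<in>T - {n. fs n \<noteq> (\<lambda>x. 0)}. (V ^^ n) (orbit_mult \<phi> y (fs n) z) i = 0"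
    proof
      fix n assume "n \<in> T - {n. fs n \<noteq> (\<lambda>x. 0)}"
      then have "fs n = (\<lambda>x. 0)" by simp
      then have "orbit_mult \<phi> y (fs n) z = (\<lambda>i. 0)" by (simp add: orbit_mult_def)
      then show "(V ^^ n) (orbit_mult \<phi> y (fs n) z) i = 0" using pow_zero[where V=V and n=n, OF V] by simp
    qed
  qed
qed

definition supp :: "(nat \<Rightarrow> 'x \<Rightarrow> complex) \<Rightarrow> nat set" where
  "supp fs = {n. fs n \<noteq> (\<lambda>x. 0)}"

lemma rep_poly_diff:
  fixes V :: "(nat \<Rightarrow> complex) \<Rightarrow> (nat \<Rightarrow> complex)"
  assumes V: "\<And>a b. V (\<lambda>i. a i - b i) = (\<lambda>i. V a i - V b i)"
    and A: "finite (supp A)" and B: "finite (supp B)"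
  shows "rep_poly (orbit_mult \<phi> y) V (\<lambda>n x. A n x - B n x) z =
    (\<lambda>i. rep_poly (orbit_mult \<phi> y) V A z i - rep_poly (orbit_mult \<phi> y) V B z i)"
proof -
  let ?T = "supp A \<union> supp B"
  have fT: "finite ?T" using A B by simp
  have s1: "{n. (\<lambda>x. A n x - B n x) \<noteq> (\<lambda>x. 0)} \<subseteq> ?T" by (auto simp: supp_def)
  have s2: "{n. A n \<noteq> (\<lambda>x. 0)} \<subseteq> ?T" "{n. B n \<noteq> (\<lambda>x. 0)} \<subseteq> ?T" by (auto simp: supp_def)
  have om: "orbit_mult \<phi> y (\<lambda>x. A n x - B n x) z = (\<lambda>i. orbit_mult \<phi> y (A n) z i - orbit_mult \<phi> y (B n) z i)" for n
    by (simp add: orbit_mult_def algebra_simps)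
  show ?thesis
    unfolding rep_poly_supset[where V=V, OF V fT s1] rep_poly_supset[where V=V, OF V fT s2(1)] rep_poly_supset[where V=V, OF V fT s2(2)]
      om pow_diff[where V=V, OF V] by (simp add: sum_subtractf)
qed

lemma sum_mod_rep:
  fixes g :: "nat \<Rightarrow> real"
  shows "(\<Sum>j\<in>{0..<K*p}. g (j mod p)) = real K * (\<Sum>j<p. g j)"
proof (induction K)
  case 0 then show ?case by simp
next
  case (Suc K)
  have "(\<Sum>j\<in>{0..<Suc K*p}. g (j mod p)) = (\<Sum>j\<in>{0..<K*p}. g (j mod p)) + (\<Sum>j\<in>{K*p..<Suc K*p}. g (j mod p))"
    by (rule sum.atLeastLessThan_concat[symmetric]) auto
  also have "(\<Sum>j\<in>{K*p..<Suc K*p}. g (j mod p)) = (\<Sum>j\<in>{0..<p}. g ((j + K*p) mod p))"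
    using sum.shift_bounds_nat_ivl[of "\<lambda>j. g (j mod p)" 0 "K*p" p] by (simp add: add.commute)
  also have "\<dots> = (\<Sum>j<p. g j)" by (auto simp: atLeast0LessThan intro!: sum.cong)
  finally show ?case using Suc by (simp add: algebra_simps)
qed

lemma sum_mod_rep2:
  fixes g :: "nat \<Rightarrow> real"
  assumes "M \<le> K"
  shows "(\<Sum>j\<in>{M*p..<K*p}. g (j mod p)) = (real K - real M) * (\<Sum>j<p. g j)"
proof -
  have "(\<Sum>j\<in>{0..<K*p}. g (j mod p)) = (\<Sum>j\<in>{0..<M*p}. g (j mod p)) + (\<Sum>j\<in>{M*p..<K*p}. g (j mod p))"
    by (rule sum.atLeastLessThan_concat[symmetric]) (use assms in auto)
  then show ?thesis using sum_mod_rep[where g=g and K=K and p=p] sum_mod_rep[where g=g and K=M and p=p] by (simp add: algebra_simps)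
qed

context rep begin

lemma Vpow_scale: "l2 z \<Longrightarrow> (V ^^ n) (\<lambda>i. c * z i) = (\<lambda>i. c * (V ^^ n) z i)"
proof (induction n)
  case 0 then show ?case by simp
next
  case (Suc n)
  have "(V ^^ Suc n) (\<lambda>i. c * z i) = V (\<lambda>i. c * (V ^^ n) z i)" using Suc by simp
  also have "\<dots> = (\<lambda>i. c * V ((V ^^ n) z) i)" by (rule V_scale) (use V_pow Suc.prems in blast)
  finally show ?case by simp
qed

lemma rho_scale_z: "continuous_on UNIV f \<Longrightarrow> l2 z \<Longrightarrow> \<rho> f (\<lambda>i. c * z i) = (\<lambda>i. c * \<rho> f z i)"
  using bop unfolding bounded_op_def by blast

lemma rep_poly_scale:
  assumes fs: "is_poly fs" and z: "l2 z"
  shows "rep_poly \<rho> V fs (\<lambda>i. c * z i) = (\<lambda>i. c * rep_poly \<rho> V fs z i)"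
proof -
  have cont: "\<And>n. continuous_on UNIV (fs n)" using fs unfolding is_poly_def by auto
  have "(V ^^ n) (\<rho> (fs n) (\<lambda>i. c * z i)) = (\<lambda>i. c * (V ^^ n) (\<rho> (fs n) z) i)" for n
    unfolding rho_scale_z[OF cont z] by (rule Vpow_scale[OF l2_rho[OF cont z]])
  then show ?thesis unfolding rep_poly_def by (simp add: sum_distrib_left)
qed

lemma l2norm_zero: "l2 w \<Longrightarrow> l2norm w = 0 \<Longrightarrow> w i = 0"
  using l2_finite_le[of w "{i}"] by simp

lemma rep_poly_homog:
  assumes cpt: "compact (UNIV :: 'x set)" and fs: "is_poly fs" and w: "l2 w"
  shows "l2norm (rep_poly \<rho> V fs w) \<le> opnorm (rep_poly \<rho> V fs) * l2norm w"
proof -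
  obtain B where B: "\<And>z. l2 z \<Longrightarrow> l2norm z \<le> 1 \<Longrightarrow> l2 (rep_poly \<rho> V fs z) \<and> l2norm (rep_poly \<rho> V fs z) \<le> B"
    using rep_opnorm_bounded[OF cpt fs isrep] by blast
  show ?thesis
  proof (cases "l2norm w = 0")
    case True
    have w0: "\<And>i. w i = 0" by (rule l2norm_zero[OF w True])
    have e: "(\<lambda>i. 0 * w i) = w" by (simp add: w0 fun_eq_iff)
    have "rep_poly \<rho> V fs (\<lambda>i. 0 * w i) = (\<lambda>i. 0 * rep_poly \<rho> V fs w i)"
      by (rule rep_poly_scale[OF fs w])
    then have "rep_poly \<rho> V fs w = (\<lambda>i. 0)" unfolding e by simp
    then show ?thesis using True by (simp add: l2norm_def)
  next
    case False
    then have np: "l2norm w > 0" using False l2norm_nonneg[of w] by linarith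
    define c where "c = complex_of_real (1 / l2norm w)"
    have cz: "l2 (\<lambda>i. c * w i)" by (rule l2_scale[OF w])
    have cc: "cmod c = 1 / l2norm w" unfolding c_def norm_of_real using np by simp
    have n1: "l2norm (\<lambda>i. c * w i) = 1" unfolding l2norm_scale cc using np by simp
    have Bb: "\<And>z. l2 z \<Longrightarrow> l2norm z \<le> 1 \<Longrightarrow> l2norm (rep_poly \<rho> V fs z) \<le> B"
      using B by blast
    have "l2norm (rep_poly \<rho> V fs (\<lambda>i. c * w i)) \<le> opnorm (rep_poly \<rho> V fs)"
      using opnorm_ge[OF Bb cz eq_refl[OF n1]] .
    then have "1 / l2norm w * l2norm (rep_poly \<rho> V fs w) \<le> opnorm (rep_poly \<rho> V fs)"
      unfolding rep_poly_scale[OF fs w] l2norm_scale cc .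
    then have "l2norm (rep_poly \<rho> V fs w) / l2norm w \<le> opnorm (rep_poly \<rho> V fs)"
      by simp
    then show ?thesis using np by (simp add: pos_divide_le_eq)
  qed
qed

end

lemma pi_formula:
  "pi_x \<phi> y F w i = (\<Sum>n\<in>{n. F n \<noteq> (\<lambda>x. 0)}. if n \<le> i then F n ((\<phi> ^^ (i - n)) y) * w (i - n) else 0)"
  by (simp add: pi_x_def rep_poly_def shift_pow orbit_mult_def)

lemma Pi_formula:
  assumes "i < period \<phi> y"
  shows "Pi_yl \<phi> y l F u i = (\<Sum>n\<in>{n. F n \<noteq> (\<lambda>x. 0)}.
     l ^ n * (F n ((\<phi> ^^ ((i + n * (period \<phi> y - 1)) mod period \<phi> y)) y) *
       u ((i + n * (period \<phi> y - 1)) mod period \<phi> y)))"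
  by (simp add: Pi_yl_def rep_poly_def cyc_pow[OF assms] orbit_mult_def)

lemma cnj_pow_split:
  assumes l: "cmod l = 1" and "n \<le> i"
  shows "cnj l ^ (i - n) = cnj l ^ i * l ^ n"
proof -
  have "cnj l * l = 1" using l complex_norm_square[of l] by (simp add: mult.commute)
  then have "cnj l ^ n * l ^ n = 1" by (metis power_mult_distrib power_one)
  moreover have "cnj l ^ i = cnj l ^ (i - n) * cnj l ^ n"
    using assms(2) by (simp flip: power_add)
  ultimately show ?thesis by (simp add: mult.assoc)
qed

lemma key_identity:
  fixes \<phi> :: "'x \<Rightarrow> 'x"
  assumes per: "periodic_pt \<phi> y" and l: "cmod l = 1"
    and N: "\<And>n. F n \<noteq> (\<lambda>x. 0) \<Longrightarrow> n < N" and fin: "finite {n. F n \<noteq> (\<lambda>x. 0)}"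
    and i: "N \<le> i" "i < K * period \<phi> y"
    and w: "w = (\<lambda>j. if j < K * period \<phi> y then cnj l ^ j * u (j mod period \<phi> y) else 0)"
  shows "pi_x \<phi> y F w i = cnj l ^ i * Pi_yl \<phi> y l F u (i mod period \<phi> y)"
proof -
  define p where "p = period \<phi> y"
  have p0: "p > 0" and pp: "(\<phi> ^^ p) y = y" using period_props[OF per] unfolding p_def by auto
  have ip: "i mod p < p" using p0 by simp
  have Pi_i: "Pi_yl \<phi> y l F u (i mod p) = (\<Sum>n\<in>{n. F n \<noteq> (\<lambda>x. 0)}.
     l ^ n * (F n ((\<phi> ^^ ((i mod p + n * (p - 1)) mod p)) y) * u ((i mod p + n * (p - 1)) mod p)))"
    using Pi_formula[OF ip[unfolded p_def], of l F u] unfolding p_def .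
  show ?thesis
    unfolding pi_formula p_def[symmetric] Pi_i sum_distrib_left
  proof (rule sum.cong[OF refl])
    fix n assume "n \<in> {n. F n \<noteq> (\<lambda>x. 0)}"
    then have ni: "n \<le> i" using N i by fastforce
    have "i - n < K * p" using i unfolding p_def by simp
    then have wi: "w (i - n) = cnj l ^ (i - n) * u ((i - n) mod p)" unfolding w p_def by simp
    have "(i mod p + n * (p - 1)) mod p = (i + n * (p - 1)) mod p" by (simp add: mod_add_left_eq)
    also have "i + n * (p - 1) = (i - n) + n * p" using ni p0
      by (simp add: algebra_simps diff_mult_distrib2)
    also have "((i - n) + n * p) mod p = (i - n) mod p" by simp
    finally have jm: "(i mod p + n * (p - 1)) mod p = (i - n) mod p" .
    have fp: "(\<phi> ^^ (i - n)) y = (\<phi> ^^ ((i - n) mod p)) y" by (rule funpow_mod_period[OF pp])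
    show "(if n \<le> i then F n ((\<phi> ^^ (i - n)) y) * w (i - n) else 0) =
      cnj l ^ i * (l ^ n * (F n ((\<phi> ^^ ((i mod p + n * (p - 1)) mod p)) y) * u ((i mod p + n * (p - 1)) mod p)))"
      unfolding jm using ni wi fp cnj_pow_split[OF l ni] by (simp add: ac_simps)
  qed
qed

lemma vnorm_sq: "(vnorm p z)^2 = (\<Sum>i<p. (cmod (z i))^2)"
  unfolding vnorm_def by (simp add: sum_nonneg)

lemma vnorm_nonneg: "0 \<le> vnorm p z"
  unfolding vnorm_def by (simp add: sum_nonneg)

lemma pi_ge_Pi:
  fixes \<phi> :: "'x::topological_space \<Rightarrow> 'x"
  assumes cpt: "compact (UNIV :: 'x set)" and per: "periodic_pt \<phi> y" and l: "cmod l = 1"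
    and F: "is_poly F" and u: "vnorm (period \<phi> y) u \<le> 1"
  shows "vnorm (period \<phi> y) (Pi_yl \<phi> y l F u) \<le> opnorm (pi_x \<phi> y F)"
proof -
  define p where "p = period \<phi> y"
  have p0: "p > 0" using period_props[OF per] unfolding p_def by auto
  interpret R: rep \<phi> "orbit_mult \<phi> y" shift by unfold_locales (rule pi_rep[OF cpt])
  have fin: "finite {n. F n \<noteq> (\<lambda>x. 0)}" using F unfolding is_poly_def by auto
  from fin obtain N where N0: "\<forall>n\<in>{n. F n \<noteq> (\<lambda>x. 0)}. n < N"
    unfolding finite_nat_set_iff_bounded by blast
  have N: "\<And>n. F n \<noteq> (\<lambda>x. 0) \<Longrightarrow> n < N" using N0 by simp
  define M where "M = N"
  have NM: "N \<le> M * p" unfolding M_def using p0 by simp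
  define a where "a = vnorm p (Pi_yl \<phi> y l F u)"
  define b where "b = vnorm p u"
  define opn where "opn = opnorm (pi_x \<phi> y F)"
  have b0: "0 \<le> b" unfolding b_def by (rule vnorm_nonneg)
  have b1: "b \<le> 1" using u unfolding b_def p_def .
  have a0: "0 \<le> a" unfolding a_def by (rule vnorm_nonneg)
  have a2: "a^2 = (\<Sum>j<p. (cmod (Pi_yl \<phi> y l F u j))^2)" unfolding a_def by (rule vnorm_sq)
  have b2: "b^2 = (\<Sum>j<p. (cmod (u j))^2)" unfolding b_def by (rule vnorm_sq)
  have piF: "pi_x \<phi> y F = rep_poly (orbit_mult \<phi> y) shift F" by (rule ext) (simp add: pi_x_def)
  obtain B where B: "\<And>z. l2 z \<Longrightarrow> l2norm z \<le> 1 \<Longrightarrow> l2 (pi_x \<phi> y F z) \<and> l2norm (pi_x \<phi> y F z) \<le> B"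
    using rep_opnorm_bounded[OF cpt F pi_rep[OF cpt]] unfolding piF by blast
  have Bb: "\<And>z. l2 z \<Longrightarrow> l2norm z \<le> 1 \<Longrightarrow> l2norm (pi_x \<phi> y F z) \<le> B" using B by blast
  have opn0: "0 \<le> opn" unfolding opn_def by (rule opnorm_nonneg[OF Bb])
  obtain KK where KK: "\<And>n x. cmod (F n x) \<le> KK n" using poly_bounded[OF cpt F] by blast
  have ineq: "(real K - real M) * a^2 \<le> opn^2 * (real K * b^2)" if MK: "M \<le> K" for K
  proof -
    define w where "w = (\<lambda>j. if j < K * p then cnj l ^ j * u (j mod p) else 0)"
    have ws: "\<And>j. j \<notin> {..<K*p} \<Longrightarrow> w j = 0" unfolding w_def by auto
    have lw: "l2 w" and nw: "l2norm w = sqrt (\<Sum>j<K*p. (cmod (w j))^2)"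
      using l2_finite_support[OF finite_lessThan ws] by auto
    have "(\<Sum>j<K*p. (cmod (w j))^2) = (\<Sum>j\<in>{0..<K*p}. (cmod (u (j mod p)))^2)"
      unfolding atLeast0LessThan
    proof (rule sum.cong)
      fix j assume "j \<in> {..<K*p}"
      then have "w j = cnj l ^ j * u (j mod p)" unfolding w_def by simp
      then show "(cmod (w j))^2 = (cmod (u (j mod p)))^2" by (simp add: norm_mult norm_power l)
    qed simp
    also have "\<dots> = real K * b^2" unfolding b2 by (rule sum_mod_rep)
    finally have nw2: "(l2norm w)^2 = real K * b^2"
      unfolding nw using b0 by simp
    have lpi: "l2 (pi_x \<phi> y F w)" unfolding piF using R.rep_poly_bound[OF F KK lw] by blast
    have "(real K - real M) * a^2 = (\<Sum>j\<in>{M*p..<K*p}. (cmod (Pi_yl \<phi> y l F u (j mod p)))^2)"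
      unfolding a2 by (rule sum_mod_rep2[OF MK, symmetric])
    also have "\<dots> = (\<Sum>j\<in>{M*p..<K*p}. (cmod (pi_x \<phi> y F w j))^2)"
    proof (rule sum.cong[OF refl])
      fix j assume j: "j \<in> {M*p..<K*p}"
      have "pi_x \<phi> y F w j = cnj l ^ j * Pi_yl \<phi> y l F u (j mod p)"
        unfolding p_def
      proof (rule key_identity[OF per l N fin _ _ w_def[unfolded p_def]])
        show "N \<le> j" using j NM by simp
        show "j < K * period \<phi> y" using j unfolding p_def by simp
      qed
      then show "(cmod (Pi_yl \<phi> y l F u (j mod p)))^2 = (cmod (pi_x \<phi> y F w j))^2"
        by (simp add: norm_mult norm_power l)
    qed
    also have "\<dots> \<le> (l2norm (pi_x \<phi> y F w))^2" by (rule l2_finite_le[OF lpi]) simp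
    also have "\<dots> \<le> (opn * l2norm w)^2"
      unfolding opn_def piF
      by (rule power_mono[OF R.rep_poly_homog[OF cpt F lw]]) simp
    also have "\<dots> = opn^2 * (real K * b^2)" by (simp add: power_mult_distrib nw2)
    finally show ?thesis .
  qed
  have "a \<le> opn"
  proof (rule ccontr)
    assume "\<not> a \<le> opn"
    then have lt: "opn < a" by simp
    have "opn^2 < a^2" by (rule power_strict_mono[OF lt opn0]) simp
    then have d: "0 < a^2 - opn^2" by simp
    obtain K0 :: nat where K0: "real M * a^2 / (a^2 - opn^2) < real K0"
      using reals_Archimedean2 by blast
    define K where "K = max K0 M"
    have MK: "M \<le> K" and K0K: "real K0 \<le> real K" unfolding K_def by auto
    have "(real K - real M) * a^2 \<le> opn^2 * (real K * b^2)" by (rule ineq[OF MK])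
    also have "\<dots> \<le> opn^2 * (real K * 1)"
    proof -
      have "b^2 \<le> 1" using b0 b1 by (simp add: power_le_one)
      then show ?thesis by (intro mult_left_mono) auto
    qed
    finally have h: "(real K - real M) * a^2 \<le> opn^2 * (real K * 1)" .
    have e1: "(real K - real M) * a^2 = real K * a^2 - real M * a^2" by (rule left_diff_distrib)
    have e2: "real K * (a^2 - opn^2) = real K * a^2 - real K * opn^2" by (rule right_diff_distrib)
    have e3: "opn^2 * (real K * 1) = real K * opn^2" by simp
    have h2: "real K * a^2 - real M * a^2 \<le> real K * opn^2" using h unfolding e1 e3 .
    have gen: "\<And>x y z::real. x - y \<le> z \<Longrightarrow> x - z \<le> y" by linarith
    have "real K * (a^2 - opn^2) \<le> real M * a^2" unfolding e2 by (rule gen[OF h2])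
    then have "real K \<le> real M * a^2 / (a^2 - opn^2)" using d by (simp add: pos_le_divide_eq)
    then show False using K0 K0K by linarith
  qed
  then show ?thesis unfolding a_def opn_def p_def .
qed

lemma conv_from_bound:
  fixes s :: "nat \<Rightarrow> real"
  assumes le: "\<And>k m. s k - s m \<le> e k m"
    and C: "\<And>\<epsilon>. \<epsilon> > 0 \<Longrightarrow> \<exists>N. \<forall>k\<ge>N. \<forall>m\<ge>N. e k m < \<epsilon>"
  shows "s \<longlonglongrightarrow> lim s"
proof -
  have "Cauchy s"
  proof (rule CauchyI)
    fix \<epsilon> :: real assume "0 < \<epsilon>"
    then obtain N where N: "\<forall>k\<ge>N. \<forall>m\<ge>N. e k m < \<epsilon>" using C by blast
    show "\<exists>M. \<forall>m\<ge>M. \<forall>n\<ge>M. norm (s m - s n) < \<epsilon>"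
    proof (intro exI[of _ N] allI impI)
      fix m n assume "N \<le> m" "N \<le> n"
      then have "e m n < \<epsilon>" "e n m < \<epsilon>" using N by auto
      moreover have "s m - s n \<le> e m n" "s n - s m \<le> e n m" by (rule le)+
      ultimately show "norm (s m - s n) < \<epsilon>" by (simp add: abs_less_iff)
    qed
  qed
  then show ?thesis using Cauchy_convergent_iff convergent_LIMSEQ_iff by blast
qed

lemma is_poly_diff:
  assumes "is_poly A" "is_poly B"
  shows "is_poly (\<lambda>n x. A n x - B n x)"
proof -
  have "{n. (\<lambda>x. A n x - B n x) \<noteq> (\<lambda>x. 0)} \<subseteq> {n. A n \<noteq> (\<lambda>x. 0)} \<union> {n. B n \<noteq> (\<lambda>x. 0)}"
    by auto
  moreover have "finite ({n. A n \<noteq> (\<lambda>x. 0)} \<union> {n. B n \<noteq> (\<lambda>x. 0)})"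
    using assms unfolding is_poly_def by auto
  ultimately have "finite {n. (\<lambda>x. A n x - B n x) \<noteq> (\<lambda>x. 0)}" by (rule finite_subset)
  moreover have "continuous_on UNIV (\<lambda>x. A n x - B n x)" for n
    using assms unfolding is_poly_def by (intro continuous_on_diff) auto
  ultimately show ?thesis unfolding is_poly_def by blast
qed

lemma vnorm_triangle: "vnorm p (\<lambda>i. a i + b i) \<le> vnorm p a + vnorm p b"
proof -
  have "vnorm p (\<lambda>i. a i + b i) = L2_set (\<lambda>i. cmod (a i + b i)) {..<p}" by (simp add: vnorm_def L2_set_def)
  also have "\<dots> \<le> L2_set (\<lambda>i. cmod (a i) + cmod (b i)) {..<p}"
    by (intro L2_set_mono norm_triangle_ineq) auto
  also have "\<dots> \<le> L2_set (\<lambda>i. cmod (a i)) {..<p} + L2_set (\<lambda>i. cmod (b i)) {..<p}"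
    by (rule L2_set_triangle_ineq)
  also have "\<dots> = vnorm p a + vnorm p b" by (simp add: vnorm_def L2_set_def)
  finally show ?thesis .
qed

context
  fixes \<phi> :: "'x::topological_space \<Rightarrow> 'x" and y :: 'x
  assumes cpt: "compact (UNIV :: 'x set)"
begin

lemma pi_bounded:
  assumes "is_poly F"
  obtains B where "\<And>z. l2 z \<Longrightarrow> l2norm z \<le> 1 \<Longrightarrow> l2 (pi_x \<phi> y F z) \<and> l2norm (pi_x \<phi> y F z) \<le> B"
proof -
  have piF: "pi_x \<phi> y F = rep_poly (orbit_mult \<phi> y) shift F" by (rule ext) (simp add: pi_x_def)
  show ?thesis using rep_opnorm_bounded[OF cpt assms pi_rep[OF cpt]] that unfolding piF by blast
qed

lemma pi_diff:
  assumes A: "is_poly A" and B: "is_poly B"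
  shows "pi_x \<phi> y A z = (\<lambda>i. pi_x \<phi> y B z i + pi_x \<phi> y (\<lambda>n x. A n x - B n x) z i)"
proof -
  have fA: "finite (supp A)" and fB: "finite (supp B)" using A B unfolding is_poly_def supp_def by auto
  have "pi_x \<phi> y (\<lambda>n x. A n x - B n x) z = (\<lambda>i. pi_x \<phi> y A z i - pi_x \<phi> y B z i)"
    unfolding pi_x_def by (rule rep_poly_diff[where V=shift, OF shift_diff fA fB])
  then show ?thesis by simp
qed

lemma pi_triangle:
  assumes A: "is_poly A" and B: "is_poly B"
  shows "opnorm (pi_x \<phi> y A) \<le> opnorm (pi_x \<phi> y B) + opnorm (pi_x \<phi> y (\<lambda>n x. A n x - B n x))"
proof -
  have D: "is_poly (\<lambda>n x. A n x - B n x)" by (rule is_poly_diff[OF A B])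
  obtain BB where BB: "\<And>z. l2 z \<Longrightarrow> l2norm z \<le> 1 \<Longrightarrow> l2 (pi_x \<phi> y B z) \<and> l2norm (pi_x \<phi> y B z) \<le> BB"
    using pi_bounded[OF B] by blast
  obtain BD where BD: "\<And>z. l2 z \<Longrightarrow> l2norm z \<le> 1 \<Longrightarrow> l2 (pi_x \<phi> y (\<lambda>n x. A n x - B n x) z) \<and>
      l2norm (pi_x \<phi> y (\<lambda>n x. A n x - B n x) z) \<le> BD"
    using pi_bounded[OF D] by blast
  have BB': "\<And>z. l2 z \<Longrightarrow> l2norm z \<le> 1 \<Longrightarrow> l2norm (pi_x \<phi> y B z) \<le> BB" using BB by blast
  have BD': "\<And>z. l2 z \<Longrightarrow> l2norm z \<le> 1 \<Longrightarrow> l2norm (pi_x \<phi> y (\<lambda>n x. A n x - B n x) z) \<le> BD" using BD by blast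
  show ?thesis
  proof (rule opnorm_le)
    show "0 \<le> opnorm (pi_x \<phi> y B) + opnorm (pi_x \<phi> y (\<lambda>n x. A n x - B n x))"
      using opnorm_nonneg[OF BB'] opnorm_nonneg[OF BD'] by simp
    fix z :: "nat \<Rightarrow> complex" assume z: "l2 z" "l2norm z \<le> 1"
    have "l2norm (pi_x \<phi> y A z) \<le> l2norm (pi_x \<phi> y B z) + l2norm (pi_x \<phi> y (\<lambda>n x. A n x - B n x) z)"
      unfolding pi_diff[OF A B, of z] using BB[OF z] BD[OF z] by (intro l2norm_triangle) auto
    also have "\<dots> \<le> opnorm (pi_x \<phi> y B) + opnorm (pi_x \<phi> y (\<lambda>n x. A n x - B n x))"
      by (intro add_mono opnorm_ge[OF BB' z] opnorm_ge[OF BD' z])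
    finally show "l2norm (pi_x \<phi> y A z) \<le> opnorm (pi_x \<phi> y B) + opnorm (pi_x \<phi> y (\<lambda>n x. A n x - B n x))" .
  qed
qed

context
  fixes l :: complex
  assumes per: "periodic_pt \<phi> y" and l: "cmod l = 1"
begin

lemma matnorm_bdd:
  assumes "is_poly F"
  shows "bdd_above {vnorm (period \<phi> y) (Pi_yl \<phi> y l F z) | z. vnorm (period \<phi> y) z \<le> 1}"
  by (rule bdd_aboveI[of _ "opnorm (pi_x \<phi> y F)"]) (use pi_ge_Pi[OF cpt per l assms] in blast)

lemma matnorm_le_pi:
  assumes "is_poly F"
  shows "matnorm (period \<phi> y) (Pi_yl \<phi> y l F) \<le> opnorm (pi_x \<phi> y F)"
  unfolding matnorm_def
proof (rule cSup_least)
  have "vnorm (period \<phi> y) (\<lambda>i. 0) \<le> 1" by (simp add: vnorm_def)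
  then show "{vnorm (period \<phi> y) (Pi_yl \<phi> y l F z) |z. vnorm (period \<phi> y) z \<le> 1} \<noteq> {}" by blast
qed (use pi_ge_Pi[OF cpt per l assms] in blast)

lemma matnorm_ge:
  assumes "is_poly F" "vnorm (period \<phi> y) z \<le> 1"
  shows "vnorm (period \<phi> y) (Pi_yl \<phi> y l F z) \<le> matnorm (period \<phi> y) (Pi_yl \<phi> y l F)"
  unfolding matnorm_def by (rule cSup_upper) (use matnorm_bdd[OF assms(1)] assms(2) in blast)+

lemma Pi_triangle:
  assumes A: "is_poly A" and B: "is_poly B"
  shows "matnorm (period \<phi> y) (Pi_yl \<phi> y l A) \<le> matnorm (period \<phi> y) (Pi_yl \<phi> y l B)
    + matnorm (period \<phi> y) (Pi_yl \<phi> y l (\<lambda>n x. A n x - B n x))"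
  unfolding matnorm_def[of _ "Pi_yl \<phi> y l A"]
proof (rule cSup_least)
  have "vnorm (period \<phi> y) (\<lambda>i. 0) \<le> 1" by (simp add: vnorm_def)
  then show "{vnorm (period \<phi> y) (Pi_yl \<phi> y l A z) |z. vnorm (period \<phi> y) z \<le> 1} \<noteq> {}" by blast
next
  have D: "is_poly (\<lambda>n x. A n x - B n x)" by (rule is_poly_diff[OF A B])
  have fA: "finite (supp A)" and fB: "finite (supp B)" using A B unfolding is_poly_def supp_def by auto
  fix r assume "r \<in> {vnorm (period \<phi> y) (Pi_yl \<phi> y l A z) |z. vnorm (period \<phi> y) z \<le> 1}"
  then obtain z where r: "r = vnorm (period \<phi> y) (Pi_yl \<phi> y l A z)" and z: "vnorm (period \<phi> y) z \<le> 1"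
    by blast
  have "Pi_yl \<phi> y l (\<lambda>n x. A n x - B n x) z = (\<lambda>i. Pi_yl \<phi> y l A z i - Pi_yl \<phi> y l B z i)"
    unfolding Pi_yl_def by (rule rep_poly_diff[where V="cyc (period \<phi> y) l", OF cyc_diff fA fB])
  then have e: "Pi_yl \<phi> y l A z = (\<lambda>i. Pi_yl \<phi> y l B z i + Pi_yl \<phi> y l (\<lambda>n x. A n x - B n x) z i)"
    by simp
  have "r \<le> vnorm (period \<phi> y) (Pi_yl \<phi> y l B z) + vnorm (period \<phi> y) (Pi_yl \<phi> y l (\<lambda>n x. A n x - B n x) z)"
    unfolding r e by (rule vnorm_triangle)
  also have "\<dots> \<le> matnorm (period \<phi> y) (Pi_yl \<phi> y l B) + matnorm (period \<phi> y) (Pi_yl \<phi> y l (\<lambda>n x. A n x - B n x))"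
    by (intro add_mono matnorm_ge[OF B z] matnorm_ge[OF D z])
  finally show "r \<le> matnorm (period \<phi> y) (Pi_yl \<phi> y l B) + matnorm (period \<phi> y) (Pi_yl \<phi> y l (\<lambda>n x. A n x - B n x))" .
qed

end

end

theorem lemma5:
  fixes \<phi> :: "'x::t2_space \<Rightarrow> 'x" and y :: 'x and P :: "nat \<Rightarrow> nat \<Rightarrow> 'x \<Rightarrow> complex"
  assumes "compact (UNIV :: 'x set)"
    and "\<exists>\<psi>. homeomorphism UNIV UNIV \<phi> \<psi>"
    and "periodic_pt \<phi> y"
    and "infinite (UNIV :: 'h set)"
    and "in_completion TYPE('h) \<phi> P"
  shows "ext_norm (\<lambda>fs. opnorm (pi_x \<phi> y fs)) P \<ge>
         (SUP l\<in>{l::complex. cmod l = 1}. ext_norm (\<lambda>fs. matnorm (period \<phi> y) (Pi_yl \<phi> y l fs)) P)"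
proof -
  note cpt = assms(1) and per = assms(3) and inf = assms(4)
  have polys: "\<And>k. is_poly (P k)" using assms(5) unfolding in_completion_def by blast
  have C: "\<And>\<epsilon>. \<epsilon> > 0 \<Longrightarrow> \<exists>N. \<forall>k\<ge>N. \<forall>m\<ge>N. univ_norm TYPE('h) \<phi> (\<lambda>n x. P k n x - P m n x) < \<epsilon>"
    using assms(5) unfolding in_completion_def by blast
  define U where "U = (\<lambda>k m. univ_norm TYPE('h) \<phi> (\<lambda>n x. P k n x - P m n x))"
  have D: "is_poly (\<lambda>n x. P k n x - P m n x)" for k m by (rule is_poly_diff[OF polys polys])
  have piU: "opnorm (pi_x \<phi> y (\<lambda>n x. P k n x - P m n x)) \<le> U k m" for k m
  proof -
    have "pi_x \<phi> y (\<lambda>n x. P k n x - P m n x) = rep_poly (orbit_mult \<phi> y) shift (\<lambda>n x. P k n x - P m n x)"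
      by (rule ext) (simp add: pi_x_def)
    then show ?thesis unfolding U_def using rep_le_univ[OF cpt D inf pi_rep[OF cpt]] by simp
  qed
  define s where "s = (\<lambda>k. opnorm (pi_x \<phi> y (P k)))"
  have sconv: "s \<longlonglongrightarrow> lim s"
  proof (rule conv_from_bound[of s U])
    fix k m
    have "s k \<le> s m + opnorm (pi_x \<phi> y (\<lambda>n x. P k n x - P m n x))"
      unfolding s_def by (rule pi_triangle[OF cpt polys polys])
    then show "s k - s m \<le> U k m" using piU[of k m] by simp
  next
    fix \<epsilon> :: real assume "\<epsilon> > 0" then show "\<exists>N. \<forall>k\<ge>N. \<forall>m\<ge>N. U k m < \<epsilon>" unfolding U_def by (rule C)
  qed
  have each: "ext_norm (\<lambda>fs. matnorm (period \<phi> y) (Pi_yl \<phi> y l fs)) P \<le> ext_norm (\<lambda>fs. opnorm (pi_x \<phi> y fs)) P"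
    if l: "cmod l = 1" for l
  proof -
    define t where "t = (\<lambda>k. matnorm (period \<phi> y) (Pi_yl \<phi> y l (P k)))"
    have tconv: "t \<longlonglongrightarrow> lim t"
    proof (rule conv_from_bound[of t U])
      fix k m
      have "t k \<le> t m + matnorm (period \<phi> y) (Pi_yl \<phi> y l (\<lambda>n x. P k n x - P m n x))"
        unfolding t_def by (rule Pi_triangle[OF cpt per l polys polys])
      moreover have "matnorm (period \<phi> y) (Pi_yl \<phi> y l (\<lambda>n x. P k n x - P m n x)) \<le> U k m"
        using matnorm_le_pi[OF cpt per l D[of k m]] piU[of k m] by (rule order_trans)
      ultimately show "t k - t m \<le> U k m" by simp
    next
      fix \<epsilon> :: real assume "\<epsilon> > 0" then show "\<exists>N. \<forall>k\<ge>N. \<forall>m\<ge>N. U k m < \<epsilon>" unfolding U_def by (rule C)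
    qed
    have "lim t \<le> lim s"
      by (rule LIMSEQ_le[OF tconv sconv]) (auto simp: t_def s_def intro: matnorm_le_pi[OF cpt per l polys])
    then show ?thesis unfolding ext_norm_def t_def s_def .
  qed
  show ?thesis
  proof (rule cSUP_least)
    have "(1::complex) \<in> {l::complex. cmod l = 1}" by simp
    then show "{l::complex. cmod l = 1} \<noteq> {}" by blast
  qed (use each in blast)
qed

end
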